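(* Let $n\ge2$, $k\in\mathbb{R}$, and $d\ge0$ with $d<\pi\sqrt{(n-1)/k}$ if $k>0$. Set $\theta=\sqrt{|k|/(n-1)}\,d$ and $K=d^2k/(n-1)$, and consider the LQ problem $(A,B,Q,1)$ on $\mathbb{R}^n$ with $$A=\mathbb{0}_n,\qquad B=\mathbb{1}_n,\qquad Q=\begin{pmatrix}K\mathbb{1}_{n-1}&\mathbb{0}_{n-1,1}\\ \mathbb{0}_{1,n-1}&\mathbb{0}_1\end{pmatrix}.$$ Then $1<t^*$ for this problem and its distortion coefficients satisfy, for all $\tau\in[0,1]$, $$\beta_\tau^{(A,B,Q,1)}=\begin{cases}\tau\big(\frac{\sin(\tau\theta)}{\sin\theta}\big)^{n-1}& k>0,\\ \tau^n & k=0,\\ \tau\big(\frac{\sinh(\tau\theta)}{\sinh\theta}\big)^{n-1}& k<0,\end{cases}$$ (with the convention that for $k\neq0$, $d=0$ the ratio is interpreted as its limit $\tau^{n-1}$), i.e. they equal the distortion coefficients $\beta^{k,n}_\tau(x,y)$ of points $x,y$ at distance $d_g(x,y)=d$ in an $n$-dimensional Riemannian space form with constant Ricci curvature $k$.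
   Context: $\mathbb 1_i$ is the $i\times i$ identity, $\mathbb 0_j$ the $j\times j$ zero matrix, $\mathbb 0_{i,j}$ the $i\times j$ zero matrix. For an LQ problem $(A,B,Q,T)$ ($A\in\mathbb{R}^{n\times n}$, $B\in\mathbb{R}^{n\times m}$, $Q$ symmetric): admissible curves satisfy $\dot\gamma=A\gamma+Bu$, $u\in L^2$; action $\mathcal A^{0,T}(\gamma)=\frac12\int_0^T(|u|^2-\gamma^*Q\gamma)d\tau$ ($+\infty$ if not admissible); a curve is optimal if it minimizes $\mathcal A^{0,T}$ with fixed endpoints. Hamiltonian system $\dot p=-A^*p-Qx$, $\dot x=BB^*p+Ax$; $t>0$ is conjugate if a nontrivial solution has $x(0)=x(t)=0$; $t^*$ is the first conjugate time. Distortion coefficients (for $T<t^*$): $Z_\tau(x,F)=\{\gamma(\tau):\gamma\text{ optimal on }[0,T],\gamma(0)=x,\gamma(T)\in F\}$, $\beta_\tau(x,y)=\limsup_{r\to0^+}\mathscr L^n(Z_\tau(x,B_r(y)))/\mathscr L^n(B_r(y))$; they are independent of $(x,y)$ and denoted $\beta^{(A,B,Q,T)}_\tau$. *)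

theory Defs
  imports "HOL-Analysis.Analysis"
begin

text \<open>u is an L^2 control on [0,T] steering gamma: gamma' = A gamma + B u (in integral form,
  i.e. gamma is absolutely continuous and solves the ODE a.e.).\<close>
definition lq_control ::
  "real^'n^'n \<Rightarrow> real^'m^'n \<Rightarrow> real \<Rightarrow> (real \<Rightarrow> real^'n) \<Rightarrow> (real \<Rightarrow> real^'m) \<Rightarrow> bool" where
  "lq_control A B T \<gamma> u \<longleftrightarrow>
     set_borel_measurable lborel {0..T} u \<and>
     set_integrable lborel {0..T} (\<lambda>t. (norm (u t))\<^sup>2) \<and>
     (\<forall>t\<in>{0..T}. ((\<lambda>s. A *v \<gamma> s + B *v u s) has_integral (\<gamma> t - \<gamma> 0)) {0..t})"

definition lq_admissible ::
  "real^'n^'n \<Rightarrow> real^'m^'n \<Rightarrow> real \<Rightarrow> (real \<Rightarrow> real^'n) \<Rightarrow> bool" where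
  "lq_admissible A B T \<gamma> \<longleftrightarrow> (\<exists>u. lq_control A B T \<gamma> u)"

text \<open>Action: 1/2 int_0^T (|u|^2 - gamma^* Q gamma), +infinity if not admissible.
  (If several controls produce gamma, the cheapest one is taken; for injective B, e.g.
  B = identity, the control is unique a.e.)\<close>
definition lq_action ::
  "real^'n^'n \<Rightarrow> real^'m^'n \<Rightarrow> real^'n^'n \<Rightarrow> real \<Rightarrow> (real \<Rightarrow> real^'n) \<Rightarrow> ereal" where
  "lq_action A B Q T \<gamma> =
     (INF u \<in> {u. lq_control A B T \<gamma> u}.
        ereal ((1/2) * (LINT t:{0..T}|lborel. (norm (u t))\<^sup>2 - \<gamma> t \<bullet> (Q *v \<gamma> t))))"

definition lq_optimal ::
  "real^'n^'n \<Rightarrow> real^'m^'n \<Rightarrow> real^'n^'n \<Rightarrow> real \<Rightarrow> (real \<Rightarrow> real^'n) \<Rightarrow> bool" where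
  "lq_optimal A B Q T \<gamma> \<longleftrightarrow>
     lq_admissible A B T \<gamma> \<and>
     (\<forall>\<eta>. \<eta> 0 = \<gamma> 0 \<longrightarrow> \<eta> T = \<gamma> T \<longrightarrow> lq_action A B Q T \<gamma> \<le> lq_action A B Q T \<eta>)"

definition lq_hamiltonian_solution ::
  "real^'n^'n \<Rightarrow> real^'m^'n \<Rightarrow> real^'n^'n \<Rightarrow> (real \<Rightarrow> real^'n) \<Rightarrow> (real \<Rightarrow> real^'n) \<Rightarrow> bool" where
  "lq_hamiltonian_solution A B Q p x \<longleftrightarrow>
     (\<forall>s. (p has_vector_derivative (- (transpose A *v p s) - Q *v x s)) (at s)) \<and>
     (\<forall>s. (x has_vector_derivative ((B ** transpose B) *v p s + A *v x s)) (at s))"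

definition lq_conjugate_time ::
  "real^'n^'n \<Rightarrow> real^'m^'n \<Rightarrow> real^'n^'n \<Rightarrow> real \<Rightarrow> bool" where
  "lq_conjugate_time A B Q t \<longleftrightarrow> t > 0 \<and>
     (\<exists>p x. lq_hamiltonian_solution A B Q p x \<and> \<not> (\<forall>s. p s = 0 \<and> x s = 0) \<and>
            x 0 = 0 \<and> x t = 0)"

text \<open>First conjugate time t^* (= +infinity if there is none).\<close>
definition lq_first_conjugate_time ::
  "real^'n^'n \<Rightarrow> real^'m^'n \<Rightarrow> real^'n^'n \<Rightarrow> ereal" where
  "lq_first_conjugate_time A B Q = Inf (ereal ` {t. lq_conjugate_time A B Q t})"

definition lq_Z ::
  "real^'n^'n \<Rightarrow> real^'m^'n \<Rightarrow> real^'n^'n \<Rightarrow> real \<Rightarrow> real \<Rightarrow> real^'n \<Rightarrow> (real^'n) set \<Rightarrow> (real^'n) set" where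
  "lq_Z A B Q T \<tau> x F = {\<gamma> \<tau> | \<gamma>. lq_optimal A B Q T \<gamma> \<and> \<gamma> 0 = x \<and> \<gamma> T \<in> F}"

definition lq_distortion ::
  "real^'n^'n \<Rightarrow> real^'m^'n \<Rightarrow> real^'n^'n \<Rightarrow> real \<Rightarrow> real \<Rightarrow> real^'n \<Rightarrow> real^'n \<Rightarrow> ereal" where
  "lq_distortion A B Q T \<tau> x y =
     Limsup (at_right 0) (\<lambda>r. ereal (measure lebesgue (lq_Z A B Q T \<tau> x (ball y r))
                                      / measure lebesgue (ball y r)))"

definition space_form_distortion :: "nat \<Rightarrow> real \<Rightarrow> real \<Rightarrow> real \<Rightarrow> real" where
  "space_form_distortion n k d \<tau> =
     (let \<theta> = sqrt (\<bar>k\<bar> / (real n - 1)) * d in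
      if k = 0 \<or> d = 0 then \<tau> ^ n
      else if k > 0 then \<tau> * (sin (\<tau> * \<theta>) / sin \<theta>) ^ (n - 1)
      else \<tau> * (sinh (\<tau> * \<theta>) / sinh \<theta>) ^ (n - 1))"

end

theory Submission
  imports Defs
begin

lemma ibp_core:
  fixes f g :: "real \<Rightarrow> real"
  assumes f: "set_integrable lborel {a..b} f" and g: "set_integrable lborel {a..b} g"
  shows "set_integrable lborel {a..b} (\<lambda>t. f t * (LINT s:{a..t}|lborel. g s) + (LINT s:{a..t}|lborel. f s) * g t)"
    "(LINT t:{a..b}|lborel. f t * (LINT s:{a..t}|lborel. g s) + (LINT s:{a..t}|lborel. f s) * g t)
      = (LINT s:{a..b}|lborel. f s) * (LINT s:{a..b}|lborel. g s)"
proof -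
  let ?I = "indicator {a..b} :: real \<Rightarrow> real"
  define F where "F x = ?I x * f x" for x
  define G where "G x = ?I x * g x" for x
  have Fi: "integrable lborel F" using f unfolding F_def set_integrable_def by simp
  have Gi: "integrable lborel G" using g unfolding G_def set_integrable_def by simp
  have Fm[measurable]: "F \<in> borel_measurable lborel" using Fi by auto
  have Gm[measurable]: "G \<in> borel_measurable lborel" using Gi by auto
  define P where "P = (\<lambda>(x::real,y::real). F x * G y)"
  have Pm[measurable]: "P \<in> borel_measurable (lborel \<Otimes>\<^sub>M lborel)" unfolding P_def by measurable
  have Pi: "integrable (lborel \<Otimes>\<^sub>M lborel) P"
  proof (rule lborel_pair.Fubini_integrable[OF Pm])
    show "integrable lborel (\<lambda>x. \<integral>y. norm (P (x, y)) \<partial>lborel)"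
      unfolding P_def by (simp add: abs_mult Fi Gi)
    show "AE x in lborel. integrable lborel (\<lambda>y. P (x, y))"
      unfolding P_def using Gi by simp
  qed
  define P1 where "P1 = (\<lambda>(x::real,y::real). P (x,y) * (if y \<le> x then 1 else 0))"
  define P2 where "P2 = (\<lambda>(x::real,y::real). P (x,y) * (if x < y then 1 else 0))"
  have P1m[measurable]: "P1 \<in> borel_measurable (lborel \<Otimes>\<^sub>M lborel)" unfolding P1_def by measurable
  have P2m[measurable]: "P2 \<in> borel_measurable (lborel \<Otimes>\<^sub>M lborel)" unfolding P2_def by measurable
  have P1i: "integrable (lborel \<Otimes>\<^sub>M lborel) P1"
    by (rule Bochner_Integration.integrable_bound[OF Pi P1m]) (auto simp: P1_def)
  have P2i: "integrable (lborel \<Otimes>\<^sub>M lborel) P2"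
    by (rule Bochner_Integration.integrable_bound[OF Pi P2m]) (auto simp: P2_def)
  have PP: "P = (\<lambda>z. P1 z + P2 z)" by (auto simp: P1_def P2_def fun_eq_iff)
  have IP: "integral\<^sup>L (lborel \<Otimes>\<^sub>M lborel) P = integral\<^sup>L lborel F * integral\<^sup>L lborel G"
  proof -
    have "integral\<^sup>L (lborel \<Otimes>\<^sub>M lborel) P = (\<integral>x. (\<integral>y. F x * G y \<partial>lborel) \<partial>lborel)"
      using lborel_pair.integral_fst[of "\<lambda>x y. F x * G y"] Pi unfolding P_def by simp
    also have "\<dots> = integral\<^sup>L lborel F * integral\<^sup>L lborel G" by simp
    finally show ?thesis .
  qed
  have eq1: "\<And>x. (\<integral>y. P1 (x,y) \<partial>lborel) = ?I x * (f x * (LINT s:{a..x}|lborel. g s))"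
  proof -
    fix x :: real
    show "(\<integral>y. P1 (x,y) \<partial>lborel) = ?I x * (f x * (LINT s:{a..x}|lborel. g s))"
    proof (cases "x \<in> {a..b}")
      case True
      have "(\<integral>y. P1 (x,y) \<partial>lborel) = F x * (\<integral>y. indicator {a..x} y * g y \<partial>lborel)"
        unfolding P1_def P_def G_def
        by (subst integral_mult_right_zero[symmetric], rule Bochner_Integration.integral_cong)
           (use True in \<open>auto simp: indicator_def\<close>)
      then show ?thesis using True by (simp add: F_def set_lebesgue_integral_def)
    next
      case False
      then show ?thesis by (simp add: P1_def P_def F_def)
    qed
  qed
  have eq2: "\<And>y. (\<integral>x. P2 (x,y) \<partial>lborel) = ?I y * ((LINT s:{a..y}|lborel. f s) * g y)"
  proof -
    fix y :: real
    show "(\<integral>x. P2 (x,y) \<partial>lborel) = ?I y * ((LINT s:{a..y}|lborel. f s) * g y)"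
    proof (cases "y \<in> {a..b}")
      case True
      have "(\<integral>x. P2 (x,y) \<partial>lborel) = G y * (\<integral>x. indicator {a..<y} x * f x \<partial>lborel)"
        unfolding P2_def P_def F_def
        by (subst integral_mult_right_zero[symmetric], rule Bochner_Integration.integral_cong)
           (use True in \<open>auto simp: indicator_def\<close>)
      also have "(\<integral>x. indicator {a..<y} x * f x \<partial>lborel) = (LINT s:{a..y}|lborel. f s)"
      proof -
        have "(LINT s:{a..y}|lborel. f s) = (LINT s:{a..<y}|lborel. f s)"
        proof (rule set_integral_cong_set)
          have "set_integrable lborel {a..y} f"
            by (rule set_integrable_subset[OF f]) (use True in auto)
          then show "set_borel_measurable lborel {a..y} f" unfolding set_borel_measurable_def set_integrable_def by auto
          have "set_integrable lborel {a..<y} f"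
            by (rule set_integrable_subset[OF f]) (use True in auto)
          then show "set_borel_measurable lborel {a..<y} f" unfolding set_borel_measurable_def set_integrable_def by auto
          show "AE x in lborel. (x \<in> {a..<y}) = (x \<in> {a..y})"
            using AE_lborel_singleton[of y] by eventually_elim auto
        qed
        then show ?thesis by (simp add: set_lebesgue_integral_def)
      qed
      finally show ?thesis using True by (simp add: G_def)
    next
      case False
      then show ?thesis by (simp add: P2_def P_def G_def)
    qed
  qed
  have i1: "integrable lborel (\<lambda>x. ?I x * (f x * (LINT s:{a..x}|lborel. g s)))"
    using lborel_pair.integrable_fst[of "\<lambda>x y. P1 (x,y)"] P1i eq1 by simp
  have i2: "integrable lborel (\<lambda>y. ?I y * ((LINT s:{a..y}|lborel. f s) * g y))"
    using lborel_pair.integrable_snd[of "\<lambda>x y. P2 (x,y)"] P2i eq2 by simp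
  have v1: "(\<integral>x. ?I x * (f x * (LINT s:{a..x}|lborel. g s)) \<partial>lborel) = integral\<^sup>L (lborel \<Otimes>\<^sub>M lborel) P1"
    using lborel_pair.integral_fst[of "\<lambda>x y. P1 (x,y)"] P1i eq1 by simp
  have v2: "(\<integral>y. ?I y * ((LINT s:{a..y}|lborel. f s) * g y) \<partial>lborel) = integral\<^sup>L (lborel \<Otimes>\<^sub>M lborel) P2"
    using lborel_pair.integral_snd[of "\<lambda>x y. P2 (x,y)"] P2i eq2 by simp
  show "set_integrable lborel {a..b} (\<lambda>t. f t * (LINT s:{a..t}|lborel. g s) + (LINT s:{a..t}|lborel. f s) * g t)"
    unfolding set_integrable_def using Bochner_Integration.integrable_add[OF i1 i2]
    by (simp add: distrib_left)
  have "(LINT t:{a..b}|lborel. f t * (LINT s:{a..t}|lborel. g s) + (LINT s:{a..t}|lborel. f s) * g t)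
     = (\<integral>x. ?I x * (f x * (LINT s:{a..x}|lborel. g s)) \<partial>lborel) + (\<integral>y. ?I y * ((LINT s:{a..y}|lborel. f s) * g y) \<partial>lborel)"
    unfolding set_lebesgue_integral_def[of lborel "{a..b}"] using Bochner_Integration.integral_add[OF i1 i2]
    by (simp add: distrib_left)
  also have "\<dots> = integral\<^sup>L (lborel \<Otimes>\<^sub>M lborel) P"
    unfolding v1 v2 PP by (rule Bochner_Integration.integral_add[OF P1i P2i, symmetric])
  also have "\<dots> = (LINT s:{a..b}|lborel. f s) * (LINT s:{a..b}|lborel. g s)"
    unfolding IP F_def[abs_def] G_def[abs_def] by (simp add: set_lebesgue_integral_def)
  finally show "(LINT t:{a..b}|lborel. f t * (LINT s:{a..t}|lborel. g s) + (LINT s:{a..t}|lborel. f s) * g t)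
      = (LINT s:{a..b}|lborel. f s) * (LINT s:{a..b}|lborel. g s)" .
qed

lemma si_cont:
  fixes w :: "real \<Rightarrow> real"
  assumes "continuous_on {a..b} w"
  shows "set_integrable lborel {a..b} w"
  using borel_integrable_atLeastAtMost'[OF assms] .

lemma si_mult_cont:
  fixes v w :: "real \<Rightarrow> real"
  assumes v: "set_integrable lborel {a..b} v" and w: "continuous_on {a..b} w"
  shows "set_integrable lborel {a..b} (\<lambda>t. v t * w t)"
proof -
  obtain M where M0: "\<forall>t\<in>{a..b}. norm (w t) \<le> M"
    using compact_imp_bounded[OF compact_continuous_image[OF w compact_Icc]]
    unfolding bounded_iff by auto
  then have M: "\<And>t. t \<in> {a..b} \<Longrightarrow> norm (w t) \<le> M" by blast
  have wm: "(\<lambda>x. indicator {a..b} x *\<^sub>R w x) \<in> borel_measurable borel"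
    by (rule borel_measurable_continuous_on_indicator[OF _ w]) auto
  have vi: "integrable lborel (\<lambda>x. indicator {a..b} x * v x)"
    using v unfolding set_integrable_def by simp
  have vm: "(\<lambda>x. indicator {a..b} x * v x) \<in> borel_measurable lborel"
    using vi by auto
  have "integrable lborel (\<lambda>x. indicator {a..b} x * (v x * w x))"
  proof (rule Bochner_Integration.integrable_bound[of _ "\<lambda>x. M * (indicator {a..b} x * v x)"])
    show "integrable lborel (\<lambda>x. M * (indicator {a..b} x * v x))" using vi by simp
    have "(\<lambda>x. (indicator {a..b} x * v x) * (indicator {a..b} x *\<^sub>R w x)) \<in> borel_measurable lborel"
      using vm wm by (simp add: measurable_lborel1)
    then show "(\<lambda>x. indicator {a..b} x * (v x * w x)) \<in> borel_measurable lborel"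
      by (rule measurable_cong[THEN iffD1, rotated]) (auto simp: indicator_def)
    show "AE x in lborel. norm (indicator {a..b} x * (v x * w x)) \<le> norm (M * (indicator {a..b} x * v x))"
    proof (rule AE_I2)
      fix x
      show "norm (indicator {a..b} x * (v x * w x)) \<le> norm (M * (indicator {a..b} x * v x))"
      proof (cases "x \<in> {a..b}")
        case True
        then have "\<bar>w x\<bar> \<le> M" using M by auto
        then have "\<bar>v x\<bar> * \<bar>w x\<bar> \<le> \<bar>v x\<bar> * \<bar>M\<bar>" by (intro mult_left_mono) auto
        then show ?thesis using True by (simp add: abs_mult mult.commute)
      qed simp
    qed
  qed
  then show ?thesis unfolding set_integrable_def by simp
qed

lemma prim_cont:
  fixes v :: "real \<Rightarrow> real"
  assumes v: "set_integrable lborel {a..b} v"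
  shows "continuous_on {a..b} (\<lambda>t. LINT s:{a..t}|lborel. v s)"
proof -
  have vi: "v integrable_on {a..b}" using set_borel_integral_eq_integral(1)[OF v] .
  have "continuous_on {a..b} (\<lambda>t. integral {a..t} v)" by (rule indefinite_integral_continuous_1[OF vi])
  moreover have "\<And>t. t \<in> {a..b} \<Longrightarrow> (LINT s:{a..t}|lborel. v s) = integral {a..t} v"
    by (rule set_borel_integral_eq_integral(2), rule set_integrable_subset[OF v]) auto
  ultimately show ?thesis using continuous_on_cong by (metis (mono_tags, lifting))
qed

lemma L2_L1:
  fixes v :: "real \<Rightarrow> real"
  assumes m: "set_borel_measurable lborel {a..b} v" and v2: "set_integrable lborel {a..b} (\<lambda>t. (v t)\<^sup>2)"
  shows "set_integrable lborel {a..b} v"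
proof -
  have c: "set_integrable lborel {a..b} (\<lambda>t. 1::real)" by (rule si_cont) auto
  have "integrable lborel (\<lambda>x. indicator {a..b} x * v x)"
  proof (rule Bochner_Integration.integrable_bound[of _ "\<lambda>x. indicator {a..b} x * 1 + indicator {a..b} x * (v x)\<^sup>2"])
    show "integrable lborel (\<lambda>x. indicator {a..b} x * 1 + indicator {a..b} x * (v x)\<^sup>2)"
      using c v2 unfolding set_integrable_def by simp
    show "(\<lambda>x. indicator {a..b} x * v x) \<in> borel_measurable lborel"
      using m unfolding set_borel_measurable_def by simp
    show "AE x in lborel. norm (indicator {a..b} x * v x) \<le> norm (indicator {a..b} x * 1 + indicator {a..b} x * (v x)\<^sup>2)"
    proof (rule AE_I2)
      fix x
      have "\<bar>v x\<bar> \<le> 1 + (v x)\<^sup>2"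
      proof (cases "\<bar>v x\<bar> \<le> 1")
        case False
        then have "\<bar>v x\<bar> * 1 \<le> \<bar>v x\<bar> * \<bar>v x\<bar>" by (intro mult_left_mono) auto
        then show ?thesis by (simp add: power2_eq_square)
      qed (auto intro: add_increasing2)
      then show "norm (indicator {a..b} x * v x) \<le> norm (indicator {a..b} x * 1 + indicator {a..b} x * (v x)\<^sup>2)"
        by (auto simp: indicator_def)
    qed
  qed
  then show ?thesis unfolding set_integrable_def by simp
qed

lemma smooth_prim:
  fixes F f :: "real \<Rightarrow> real"
  assumes ab: "a \<le> b" and d: "\<And>x. x \<in> {a..b} \<Longrightarrow> (F has_real_derivative f x) (at x)"
    and c: "continuous_on {a..b} f"
  shows "set_integrable lborel {a..b} f" "\<forall>t\<in>{a..b}. F t = F a + (LINT s:{a..t}|lborel. f s)"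
proof -
  show "set_integrable lborel {a..b} f" by (rule si_cont[OF c])
  show "\<forall>t\<in>{a..b}. F t = F a + (LINT s:{a..t}|lborel. f s)"
  proof
    fix t assume t: "t \<in> {a..b}"
    have "integral\<^sup>L lborel (\<lambda>x. indicator {a .. t} x *\<^sub>R f x) = F t - F a"
    proof (rule integral_FTC_atLeastAtMost)
      show "a \<le> t" using t by auto
      fix x assume "a \<le> x" "x \<le> t"
      then have "(F has_real_derivative f x) (at x)" using d t by auto
      then show "(F has_vector_derivative f x) (at x within {a..t})"
        by (simp add: has_real_derivative_iff_has_vector_derivative has_vector_derivative_at_within)
    next
      show "continuous_on {a..t} f" by (rule continuous_on_subset[OF c]) (use t in auto)
    qed
    then show "F t = F a + (LINT s:{a..t}|lborel. f s)" by (simp add: set_lebesgue_integral_def)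
  qed
qed

lemma ibp:
  fixes f g F G :: "real \<Rightarrow> real"
  assumes ab: "a \<le> b" and f: "set_integrable lborel {a..b} f" and g: "set_integrable lborel {a..b} g"
   and F: "\<forall>t\<in>{a..b}. F t = F a + (LINT s:{a..t}|lborel. f s)"
   and G: "\<forall>t\<in>{a..b}. G t = G a + (LINT s:{a..t}|lborel. g s)"
  shows "set_integrable lborel {a..b} (\<lambda>t. f t * G t + F t * g t)"
   "(LINT t:{a..b}|lborel. f t * G t + F t * g t) = F b * G b - F a * G a"
proof -
  let ?H = "\<lambda>t. f t * (LINT s:{a..t}|lborel. g s) + (LINT s:{a..t}|lborel. f s) * g t"
  have H: "set_integrable lborel {a..b} ?H" "(LINT t:{a..b}|lborel. ?H t) = (LINT s:{a..b}|lborel. f s) * (LINT s:{a..b}|lborel. g s)"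
    by (rule ibp_core[OF f g])+
  have eq: "f t * G t + F t * g t = ?H t + (G a * f t + F a * g t)" if t: "t \<in> {a..b}" for t
  proof -
    have "F t = F a + (LINT s:{a..t}|lborel. f s)" "G t = G a + (LINT s:{a..t}|lborel. g s)"
      using F G t by blast+
    then show ?thesis by (simp add: algebra_simps)
  qed
  have i2: "set_integrable lborel {a..b} (\<lambda>t. G a * f t + F a * g t)"
    using f g by (intro set_integral_add) auto
  have iall: "set_integrable lborel {a..b} (\<lambda>t. ?H t + (G a * f t + F a * g t))"
    using H(1) i2 by (rule set_integral_add)
  show "set_integrable lborel {a..b} (\<lambda>t. f t * G t + F t * g t)"
    using iall set_integrable_cong[of lborel lborel "{a..b}" "{a..b}", OF refl refl eq] by simp
  have "(LINT t:{a..b}|lborel. f t * G t + F t * g t) = (LINT t:{a..b}|lborel. ?H t + (G a * f t + F a * g t))"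
    by (rule set_lebesgue_integral_cong) (use eq in auto)
  also have "\<dots> = (LINT t:{a..b}|lborel. ?H t) + (G a * (LINT t:{a..b}|lborel. f t) + F a * (LINT t:{a..b}|lborel. g t))"
    using set_integral_add(2)[OF H(1) i2] set_integral_add(2)[of lborel "{a..b}" "\<lambda>t. G a * f t" "\<lambda>t. F a * g t"] f g
    by simp
  also have "\<dots> = F b * G b - F a * G a"
  proof -
    have "F b = F a + (LINT s:{a..b}|lborel. f s)" "G b = G a + (LINT s:{a..b}|lborel. g s)"
      using F G ab by (meson atLeastAtMost_iff order_refl)+
    then show ?thesis unfolding H(2) by (simp add: algebra_simps)
  qed
  finally show "(LINT t:{a..b}|lborel. f t * G t + F t * g t) = F b * G b - F a * G a" .
qed

lemma cot_deriv:
  fixes \<omega> \<alpha> c t :: real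
  assumes s: "sin (\<omega> * t + \<alpha>) \<noteq> 0" and w2: "\<omega>^2 = c"
  shows "((\<lambda>t. \<omega> * cos (\<omega> * t + \<alpha>) / sin (\<omega> * t + \<alpha>)) has_real_derivative (- c - (\<omega> * cos (\<omega> * t + \<alpha>) / sin (\<omega> * t + \<alpha>))^2)) (at t)"
proof -
  have "((\<lambda>t. \<omega> * cos (\<omega> * t + \<alpha>) / sin (\<omega> * t + \<alpha>)) has_real_derivative
     (\<omega> * (- sin (\<omega> * t + \<alpha>) * (\<omega> * 1 + 0)) * sin (\<omega> * t + \<alpha>) - \<omega> * cos (\<omega> * t + \<alpha>) * (cos (\<omega> * t + \<alpha>) * (\<omega> * 1 + 0))) / (sin (\<omega> * t + \<alpha>) * sin (\<omega> * t + \<alpha>))) (at t)"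
    by (intro DERIV_divide DERIV_cmult DERIV_fun_sin DERIV_fun_cos DERIV_add DERIV_const DERIV_ident s)
  moreover have "(\<omega> * (- sin (\<omega> * t + \<alpha>) * (\<omega> * 1 + 0)) * sin (\<omega> * t + \<alpha>) - \<omega> * cos (\<omega> * t + \<alpha>) * (cos (\<omega> * t + \<alpha>) * (\<omega> * 1 + 0))) / (sin (\<omega> * t + \<alpha>) * sin (\<omega> * t + \<alpha>))
     = (- c - (\<omega> * cos (\<omega> * t + \<alpha>) / sin (\<omega> * t + \<alpha>))^2)"
  proof -
    have sc: "(sin (\<omega> * t + \<alpha>))^2 = 1 - (cos (\<omega> * t + \<alpha>))^2" by (simp add: sin_squared_eq)
    show ?thesis using s unfolding w2[symmetric]
      by (simp add: field_simps power2_eq_square)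
  qed
  ultimately show ?thesis by simp
qed

lemma si_nonneg:
  fixes f :: "real \<Rightarrow> real"
  assumes "\<And>x. x \<in> S \<Longrightarrow> 0 \<le> f x"
  shows "0 \<le> (LINT x:S|lborel. f x)"
  unfolding set_lebesgue_integral_def
  by (rule Bochner_Integration.integral_nonneg) (use assms in \<open>auto simp: indicator_def\<close>)

lemma wirtinger:
  fixes v e :: "real \<Rightarrow> real" and c :: real
  assumes c: "c < pi^2" and v: "set_integrable lborel {0..1} v" and v2: "set_integrable lborel {0..1} (\<lambda>t. (v t)^2)"
   and e: "\<forall>t\<in>{0..1}. e t = e 0 + (LINT s:{0..t}|lborel. v s)" and e0: "e 0 = 0" and e1: "e 1 = 0"
  shows "set_integrable lborel {0..1} (\<lambda>t. (e t)^2)"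
    "c * (LINT t:{0..1}|lborel. (e t)^2) \<le> (LINT t:{0..1}|lborel. (v t)^2)"
proof -
  have ec: "continuous_on {0..1} e"
  proof -
    have "continuous_on {0..1} (\<lambda>t. e 0 + (LINT s:{0..t}|lborel. v s))"
      by (intro continuous_intros prim_cont[OF v])
    moreover have "continuous_on {0..1} e = continuous_on {0..1} (\<lambda>t. e 0 + (LINT s:{0..t}|lborel. v s))"
      by (rule continuous_on_cong) (use e in blast)+
    ultimately show ?thesis by simp
  qed
  show e2: "set_integrable lborel {0..1} (\<lambda>t. (e t)^2)"
    by (rule si_cont) (intro continuous_intros ec)
  show "c * (LINT t:{0..1}|lborel. (e t)^2) \<le> (LINT t:{0..1}|lborel. (v t)^2)"
  proof (cases "c \<le> 0")
    case True
    have "0 \<le> (LINT t:{0..1}|lborel. (e t)^2)" "0 \<le> (LINT t:{0..1}|lborel. (v t)^2)"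
      by (auto intro: si_nonneg)
    then show ?thesis using True by (meson mult_nonpos_nonneg order_trans)
  next
    case False
    then have cpos: "c > 0" by simp
    define \<omega> where "\<omega> = sqrt c"
    have \<omega>pos: "\<omega> > 0" using cpos by (simp add: \<omega>_def)
    have \<omega>2: "\<omega>^2 = c" using cpos by (simp add: \<omega>_def)
    have \<omega>pi: "\<omega> < pi"
    proof -
      have "sqrt c < sqrt (pi^2)" using c by (simp only: real_sqrt_less_iff)
      then show ?thesis by (simp add: \<omega>_def)
    qed
    define \<alpha> where "\<alpha> = (pi - \<omega>) / 2"
    define ar where "ar t = \<omega> * t + \<alpha>" for t
    have sinpos: "sin (ar t) > 0" if "t \<in> {0..1}" for t
    proof (rule sin_gt_zero)
      show "0 < ar t" using that \<omega>pos \<omega>pi by (auto simp: ar_def \<alpha>_def intro: add_nonneg_pos)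
      have "\<omega> * t \<le> \<omega>" using that \<omega>pos by (auto intro: mult_left_le)
      then show "ar t < pi" using \<omega>pi by (simp add: ar_def \<alpha>_def field_simps)
    qed
    define \<psi> where "\<psi> t = \<omega> * cos (ar t) / sin (ar t)" for t
    define \<psi>' where "\<psi>' t = - c - (\<psi> t)^2" for t
    have \<psi>d: "(\<psi> has_real_derivative \<psi>' t) (at t)" if "t \<in> {0..1}" for t
    proof -
      have s: "sin (ar t) \<noteq> 0" using sinpos[OF that] by simp
      show ?thesis unfolding \<psi>_def \<psi>'_def ar_def using cot_deriv[OF s[unfolded ar_def] \<omega>2] .
    qed
    have \<psi>c: "continuous_on {0..1} \<psi>"
      unfolding \<psi>_def ar_def using sinpos unfolding ar_def
      by (intro continuous_intros) (metis atLeastAtMost_iff less_irrefl)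
    have \<psi>'c: "continuous_on {0..1} \<psi>'"
      unfolding \<psi>'_def by (intro continuous_intros \<psi>c)
    have \<psi>i: "set_integrable lborel {0..1} \<psi>'" "\<forall>t\<in>{0..1}. \<psi> t = \<psi> 0 + (LINT s:{0..t}|lborel. \<psi>' s)"
      using smooth_prim[of 0 1 \<psi> \<psi>', OF zero_le_one \<psi>d \<psi>'c] by blast+
    define g2 where "g2 t = v t * \<psi> t + e t * \<psi>' t" for t
    have g2i: "set_integrable lborel {0..1} g2"
      unfolding g2_def by (rule ibp(1)[OF _ v \<psi>i(1) e \<psi>i(2)]) simp
    have eps: "\<forall>t\<in>{0..1}. e t * \<psi> t = e 0 * \<psi> 0 + (LINT s:{0..t}|lborel. g2 s)"
    proof
      fix t :: real assume t: "t \<in> {0..1}"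
      have sub: "{0..t} \<subseteq> {0..1}" using t by auto
      have "(LINT s:{0..t}|lborel. g2 s) = e t * \<psi> t - e 0 * \<psi> 0"
        unfolding g2_def
      proof (rule ibp(2))
        show "0 \<le> t" using t by auto
        show "set_integrable lborel {0..t} v" by (rule set_integrable_subset[OF v]) (use sub in auto)
        show "set_integrable lborel {0..t} \<psi>'" by (rule set_integrable_subset[OF \<psi>i(1)]) (use sub in auto)
        show "\<forall>s\<in>{0..t}. e s = e 0 + (LINT s:{0..s}|lborel. v s)" using e sub by blast
        show "\<forall>s\<in>{0..t}. \<psi> s = \<psi> 0 + (LINT s:{0..s}|lborel. \<psi>' s)" using \<psi>i(2) sub by blast
      qed
      then show "e t * \<psi> t = e 0 * \<psi> 0 + (LINT s:{0..t}|lborel. g2 s)" by simp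
    qed
    define X where "X t = v t * (e t * \<psi> t) + e t * g2 t" for t
    have Xi: "set_integrable lborel {0..1} X" "(LINT t:{0..1}|lborel. X t) = 0"
      unfolding X_def using ibp[OF zero_le_one v g2i e eps] e0 e1 by simp_all
    have eq: "(v t - e t * \<psi> t)^2 = (v t)^2 - X t - c * (e t)^2" for t
      unfolding X_def g2_def \<psi>'_def by (simp add: algebra_simps power2_eq_square)
    have "0 \<le> (LINT t:{0..1}|lborel. (v t - e t * \<psi> t)^2)" by (rule si_nonneg) simp
    also have "\<dots> = (LINT t:{0..1}|lborel. (v t)^2 - X t - c * (e t)^2)"
      unfolding eq ..
    also have "\<dots> = (LINT t:{0..1}|lborel. (v t)^2) - (LINT t:{0..1}|lborel. X t) - c * (LINT t:{0..1}|lborel. (e t)^2)"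
      using v2 Xi(1) e2 by (simp add: set_integral_diff)
    finally show ?thesis using Xi(2) by simp
  qed
qed

lemma deriv_cont_on:
  assumes "\<And>t. (h has_real_derivative h1 t) (at t)"
  shows "continuous_on S h"
  using assms by (meson DERIV_isCont continuous_at_imp_continuous_on)

lemma scalar_main:
  fixes u \<eta> h h1 :: "real \<Rightarrow> real" and c \<epsilon> :: real
  assumes c\<epsilon>: "c + \<epsilon> < pi^2"
   and um: "set_borel_measurable lborel {0..1} u" and u2: "set_integrable lborel {0..1} (\<lambda>t. (u t)^2)"
   and \<eta>: "\<forall>t\<in>{0..1}. \<eta> t = \<eta> 0 + (LINT s:{0..t}|lborel. u s)"
   and \<eta>0: "\<eta> 0 = h 0" and \<eta>1: "\<eta> 1 = h 1"
   and hd: "\<And>t. (h has_real_derivative h1 t) (at t)" and h1d: "\<And>t. (h1 has_real_derivative (- c * h t)) (at t)"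
  shows "set_integrable lborel {0..1} (\<lambda>t. (u t)^2 - c * (\<eta> t)^2)"
    "set_integrable lborel {0..1} (\<lambda>t. (\<eta> t - h t)^2)"
    "(LINT t:{0..1}|lborel. (h1 t)^2 - c * (h t)^2) + \<epsilon> * (LINT t:{0..1}|lborel. (\<eta> t - h t)^2)
       \<le> (LINT t:{0..1}|lborel. (u t)^2 - c * (\<eta> t)^2)"
proof -
  have hc: "continuous_on {0..1} h" by (rule deriv_cont_on[OF hd])
  have h1c: "continuous_on {0..1} h1" by (rule deriv_cont_on[OF h1d])
  have ui: "set_integrable lborel {0..1} u" by (rule L2_L1[OF um u2])
  define v where "v t = u t - h1 t" for t
  define e where "e t = \<eta> t - h t" for t
  have h1i: "set_integrable lborel {0..1} h1" by (rule si_cont[OF h1c])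
  have vi: "set_integrable lborel {0..1} v" unfolding v_def using ui h1i by (rule set_integral_diff)
  have uh1: "set_integrable lborel {0..1} (\<lambda>t. u t * h1 t)" by (rule si_mult_cont[OF ui h1c])
  have h1sq: "set_integrable lborel {0..1} (\<lambda>t. (h1 t)^2)" by (rule si_cont) (intro continuous_intros h1c)
  have v2: "set_integrable lborel {0..1} (\<lambda>t. (v t)^2)"
  proof -
    have "set_integrable lborel {0..1} (\<lambda>t. (u t)^2 - 2 * (u t * h1 t) + (h1 t)^2)"
      using u2 uh1 h1sq by (intro set_integral_add set_integral_diff set_integrable_mult_right) auto
    moreover have "\<And>t. (v t)^2 = (u t)^2 - 2 * (u t * h1 t) + (h1 t)^2"
      unfolding v_def by (simp add: power2_eq_square algebra_simps)
    ultimately show ?thesis by simp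
  qed
  have hp: "\<forall>t\<in>{0..1}. h t = h 0 + (LINT s:{0..t}|lborel. h1 s)"
    using smooth_prim(2)[of 0 1 h h1, OF zero_le_one hd h1c] by blast
  have h1p: "\<forall>t\<in>{0..1}. h1 t = h1 0 + (LINT s:{0..t}|lborel. - c * h s)"
  proof -
    have "continuous_on {0..1} (\<lambda>t. - c * h t)" by (intro continuous_intros hc)
    then show ?thesis using smooth_prim(2)[of 0 1 h1 "\<lambda>t. - c * h t", OF zero_le_one h1d] by blast
  qed
  have mhi: "set_integrable lborel {0..1} (\<lambda>t. - c * h t)" by (rule si_cont) (intro continuous_intros hc)
  have e0: "e 0 = 0" using \<eta>0 by (simp add: e_def)
  have e1: "e 1 = 0" using \<eta>1 by (simp add: e_def)
  have ep: "\<forall>t\<in>{0..1}. e t = e 0 + (LINT s:{0..t}|lborel. v s)"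
  proof
    fix t :: real assume t: "t \<in> {0..1}"
    have a: "\<eta> t = \<eta> 0 + (LINT s:{0..t}|lborel. u s)" using \<eta> t by blast
    have b: "h t = h 0 + (LINT s:{0..t}|lborel. h1 s)" using hp t by blast
    have "(LINT s:{0..t}|lborel. v s) = (LINT s:{0..t}|lborel. u s) - (LINT s:{0..t}|lborel. h1 s)"
      unfolding v_def
      by (rule set_integral_diff(2)) (use t in \<open>auto intro: set_integrable_subset[OF ui] set_integrable_subset[OF h1i]\<close>)
    then show "e t = e 0 + (LINT s:{0..t}|lborel. v s)" unfolding e_def a b by simp
  qed
  have W: "set_integrable lborel {0..1} (\<lambda>t. (e t)^2)" "(c + \<epsilon>) * (LINT t:{0..1}|lborel. (e t)^2) \<le> (LINT t:{0..1}|lborel. (v t)^2)"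
    using wirtinger[OF c\<epsilon> vi v2 ep e0 e1] by blast+
  define Y where "Y t = v t * h1 t + e t * (- c * h t)" for t
  have Y: "set_integrable lborel {0..1} Y" "(LINT t:{0..1}|lborel. Y t) = 0"
    unfolding Y_def using ibp[OF zero_le_one vi mhi ep h1p] e0 e1 by simp_all
  define Z where "Z t = (h1 t)^2 - c * (h t)^2" for t
  have Zi: "set_integrable lborel {0..1} Z" unfolding Z_def by (rule si_cont) (intro continuous_intros hc h1c)
  have eq: "(u t)^2 - c * (\<eta> t)^2 = Z t + (2 * Y t + ((v t)^2 - c * (e t)^2))" for t
    unfolding Z_def Y_def v_def e_def by (simp add: power2_eq_square algebra_simps)
  have i3: "set_integrable lborel {0..1} (\<lambda>t. (v t)^2 - c * (e t)^2)"
    using v2 W(1) by (intro set_integral_diff set_integrable_mult_right) auto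
  have i23: "set_integrable lborel {0..1} (\<lambda>t. 2 * Y t + ((v t)^2 - c * (e t)^2))"
    using Y(1) i3 by (intro set_integral_add set_integrable_mult_right) auto
  show "set_integrable lborel {0..1} (\<lambda>t. (u t)^2 - c * (\<eta> t)^2)"
    unfolding eq using Zi i23 by (rule set_integral_add)
  show "set_integrable lborel {0..1} (\<lambda>t. (\<eta> t - h t)^2)" using W(1) unfolding e_def .
  have "(LINT t:{0..1}|lborel. (u t)^2 - c * (\<eta> t)^2)
      = (LINT t:{0..1}|lborel. Z t) + 2 * (LINT t:{0..1}|lborel. Y t) + ((LINT t:{0..1}|lborel. (v t)^2) - c * (LINT t:{0..1}|lborel. (e t)^2))"
    unfolding eq using Zi i23 Y(1) i3 v2 W(1)
    by (simp add: set_integral_add(2) set_integral_diff(2))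
  also have "\<dots> \<ge> (LINT t:{0..1}|lborel. Z t) + \<epsilon> * (LINT t:{0..1}|lborel. (e t)^2)"
    using Y(2) W(2) by (simp add: algebra_simps)
  finally show "(LINT t:{0..1}|lborel. (h1 t)^2 - c * (h t)^2) + \<epsilon> * (LINT t:{0..1}|lborel. (\<eta> t - h t)^2)
       \<le> (LINT t:{0..1}|lborel. (u t)^2 - c * (\<eta> t)^2)"
    unfolding Z_def e_def .
qed

definition Sf :: "real \<Rightarrow> real \<Rightarrow> real" where
  "Sf c t = (if c > 0 then sin (sqrt c * t) / sin (sqrt c) else if c = 0 then t
             else sinh (sqrt (- c) * t) / sinh (sqrt (- c)))"

definition Sf1 :: "real \<Rightarrow> real \<Rightarrow> real" where
  "Sf1 c t = (if c > 0 then sqrt c * cos (sqrt c * t) / sin (sqrt c) else if c = 0 then 1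
             else sqrt (- c) * cosh (sqrt (- c) * t) / sinh (sqrt (- c)))"

lemma Sf_deriv: "(Sf c has_real_derivative Sf1 c t) (at t)"
proof -
  consider "c > 0" | "c = 0" | "c < 0" by linarith
  then show ?thesis
  proof cases
    case 1
    have "((\<lambda>t. sin (sqrt c * t) / sin (sqrt c)) has_real_derivative
           (cos (sqrt c * t) * (sqrt c * 1)) / sin (sqrt c)) (at t)"
      by (intro DERIV_cdivide DERIV_fun_sin DERIV_cmult DERIV_ident)
    then show ?thesis using 1 unfolding Sf_def[abs_def] Sf1_def by (simp add: mult.commute)
  next
    case 2
    then show ?thesis unfolding Sf_def[abs_def] Sf1_def
      by (auto intro!: derivative_eq_intros)
  next
    case 3
    then show ?thesis unfolding Sf_def[abs_def] Sf1_def
      by (auto intro!: derivative_eq_intros)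
  qed
qed

lemma Sf1_deriv: "(Sf1 c has_real_derivative (- c * Sf c t)) (at t)"
proof -
  consider "c > 0" | "c = 0" | "c < 0" by linarith
  then show ?thesis
  proof cases
    case 1
    have D0: "((\<lambda>t. sqrt c * cos (sqrt c * t) / sin (sqrt c)) has_real_derivative
           (sqrt c * (- sin (sqrt c * t) * (sqrt c * 1)) / sin (sqrt c))) (at t)"
      by (intro DERIV_cdivide DERIV_cmult DERIV_fun_cos DERIV_ident)
    have eq: "sqrt c * (- sin (sqrt c * t) * (sqrt c * 1)) / sin (sqrt c) = - c * (sin (sqrt c * t) / sin (sqrt c))"
    proof -
      have sc: "sqrt c * sqrt c = c" using 1 by simp
      have "sqrt c * (- sin (sqrt c * t) * (sqrt c * 1)) = - (sqrt c * sqrt c) * sin (sqrt c * t)"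
        by (simp add: algebra_simps)
      then show ?thesis unfolding sc by simp
    qed
    have f: "Sf1 c = (\<lambda>t. sqrt c * cos (sqrt c * t) / sin (sqrt c))" using 1 by (simp add: Sf1_def fun_eq_iff)
    have g: "Sf c t = sin (sqrt c * t) / sin (sqrt c)" using 1 by (simp add: Sf_def)
    show ?thesis unfolding f g using D0 unfolding eq .
  next
    case 2
    then show ?thesis unfolding Sf_def Sf1_def[abs_def]
      by (auto intro!: derivative_eq_intros)
  next
    case 3
    have D0: "((\<lambda>t. sqrt (-c) * cosh (sqrt (-c) * t) / sinh (sqrt (-c))) has_real_derivative
           (sqrt (-c) * (sinh (sqrt (-c) * t) * (sqrt (-c) * 1)) / sinh (sqrt (-c)))) (at t)"
      by (intro DERIV_cdivide DERIV_cmult has_field_derivative_cosh DERIV_ident)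
    have eq: "sqrt (-c) * (sinh (sqrt (-c) * t) * (sqrt (-c) * 1)) / sinh (sqrt (-c)) = - c * (sinh (sqrt (-c) * t) / sinh (sqrt (-c)))"
    proof -
      have sc: "sqrt (-c) * sqrt (-c) = -c" using 3 by simp
      have "sqrt (-c) * (sinh (sqrt (-c) * t) * (sqrt (-c) * 1)) = (sqrt (-c) * sqrt (-c)) * sinh (sqrt (-c) * t)"
        by (simp add: algebra_simps)
      then show ?thesis unfolding sc by simp
    qed
    have f: "Sf1 c = (\<lambda>t. sqrt (-c) * cosh (sqrt (-c) * t) / sinh (sqrt (-c)))" using 3 by (simp add: Sf1_def fun_eq_iff)
    have g: "Sf c t = sinh (sqrt (-c) * t) / sinh (sqrt (-c))" using 3 by (simp add: Sf_def)
    show ?thesis unfolding f g using D0 unfolding eq .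
  qed
qed

lemma Sf_0: "Sf c 0 = 0" by (simp add: Sf_def)

lemma sqrt_lt_pi: "0 < c \<Longrightarrow> c < pi^2 \<Longrightarrow> sqrt c < pi"
  by (metis abs_of_nonneg pi_ge_zero real_sqrt_abs real_sqrt_less_iff)

lemma Sf_1: "c < pi^2 \<Longrightarrow> Sf c 1 = 1"
proof -
  assume c: "c < pi^2"
  consider "c > 0" | "c = 0" | "c < 0" by linarith
  then show ?thesis
  proof cases
    case 1
    have "sin (sqrt c) > 0" using 1 sqrt_lt_pi[OF 1 c] by (intro sin_gt_zero) auto
    then show ?thesis using 1 by (simp add: Sf_def)
  next
    case 3
    have "sinh (sqrt (-c)) > 0" using 3 by simp
    then show ?thesis using 3 by (simp add: Sf_def)
  qed (simp add: Sf_def)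
qed

lemma Sf_nonneg: "c < pi^2 \<Longrightarrow> t \<in> {0..1} \<Longrightarrow> Sf c t \<ge> 0"
proof -
  assume c: "c < pi^2" and t: "t \<in> {0..1}"
  consider "c > 0" | "c = 0" | "c < 0" by linarith
  then show ?thesis
  proof cases
    case 1
    have s1: "sin (sqrt c) > 0" using 1 sqrt_lt_pi[OF 1 c] by (intro sin_gt_zero) auto
    have st: "sqrt c * t \<le> sqrt c" using t 1 by (auto intro: mult_left_le)
    have st2: "sqrt c * t \<le> pi" using st sqrt_lt_pi[OF 1 c] by linarith
    have "sin (sqrt c * t) \<ge> 0" using t 1 st2 by (intro sin_ge_zero) auto
    then show ?thesis using 1 s1 by (simp add: Sf_def)
  next
    case 3
    have "sinh (sqrt (-c)) > 0" using 3 by simp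
    moreover have "sinh (sqrt (-c) * t) \<ge> 0" using 3 t by simp
    ultimately show ?thesis using 3 by (simp add: Sf_def)
  qed (use t in \<open>simp add: Sf_def\<close>)
qed

definition hc :: "real \<Rightarrow> real \<Rightarrow> real \<Rightarrow> real \<Rightarrow> real" where
  "hc c a b t = a * Sf c (1 - t) + b * Sf c t"

definition hc1 :: "real \<Rightarrow> real \<Rightarrow> real \<Rightarrow> real \<Rightarrow> real" where
  "hc1 c a b t = - a * Sf1 c (1 - t) + b * Sf1 c t"

lemma hc_deriv: "(hc c a b has_real_derivative hc1 c a b t) (at t)"
proof -
  have "((\<lambda>t. a * Sf c (1 - t) + b * Sf c t) has_real_derivative
        (a * (Sf1 c (1 - t) * (0 - 1)) + b * Sf1 c t)) (at t)"
    by (intro DERIV_add DERIV_cmult DERIV_chain2[OF Sf_deriv] DERIV_diff DERIV_const DERIV_ident Sf_deriv)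
  then show ?thesis unfolding hc_def[abs_def] hc1_def by simp
qed

lemma hc1_deriv: "(hc1 c a b has_real_derivative (- c * hc c a b t)) (at t)"
proof -
  have "((\<lambda>t. - a * Sf1 c (1 - t) + b * Sf1 c t) has_real_derivative
        (- a * ((- c * Sf c (1 - t)) * (0 - 1)) + b * (- c * Sf c t))) (at t)"
    by (intro DERIV_add DERIV_cmult DERIV_chain2[OF Sf1_deriv] DERIV_diff DERIV_const DERIV_ident Sf1_deriv)
  then show ?thesis unfolding hc_def hc1_def[abs_def] by (simp add: algebra_simps)
qed

lemma hc_0: assumes "c < pi^2" shows "hc c a b 0 = a"
  using Sf_1[OF assms] by (simp add: hc_def Sf_0)

lemma hc_1: assumes "c < pi^2" shows "hc c a b 1 = b"
  using Sf_1[OF assms] by (simp add: hc_def Sf_0)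

lemma vec_has_integral:
  fixes f :: "real \<Rightarrow> real^'n"
  assumes "\<And>i. ((\<lambda>s. f s $ i) has_integral y $ i) S"
  shows "(f has_integral y) S"
proof (rule has_integral_componentwise)
  fix b :: "real^'n" assume "b \<in> Basis"
  then obtain i where b: "b = axis i 1" by (auto simp: Basis_vec_def)
  show "((\<lambda>x. f x \<bullet> b) has_integral y \<bullet> b) S"
    unfolding b inner_axis using assms[of i] by simp
qed

lemma si_sum:
  fixes f :: "'i \<Rightarrow> real \<Rightarrow> real"
  assumes "finite I" "\<And>i. i \<in> I \<Longrightarrow> set_integrable lborel S (f i)"
  shows "(LINT t:S|lborel. (\<Sum>i\<in>I. f i t)) = (\<Sum>i\<in>I. LINT t:S|lborel. f i t)"
proof -
  have "(LINT t:S|lborel. (\<Sum>i\<in>I. f i t)) = (\<integral>t. (\<Sum>i\<in>I. indicator S t * f i t) \<partial>lborel)"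
    unfolding set_lebesgue_integral_def by (simp add: sum_distrib_left)
  also have "\<dots> = (\<Sum>i\<in>I. \<integral>t. indicator S t * f i t \<partial>lborel)"
    by (rule Bochner_Integration.integral_sum) (use assms in \<open>auto simp: set_integrable_def\<close>)
  finally show ?thesis by (simp add: set_lebesgue_integral_def)
qed

lemma ctrl_comp:
  fixes \<eta> u :: "real \<Rightarrow> real^'n"
  assumes "lq_control (0::real^'n^'n) (mat 1 :: real^'n^'n) 1 \<eta> u"
  shows "set_borel_measurable lborel {0..1} (\<lambda>t. u t $ i)"
    "set_integrable lborel {0..1} (\<lambda>t. (u t $ i)^2)"
    "\<forall>t\<in>{0..1}. \<eta> t $ i = \<eta> 0 $ i + (LINT s:{0..t}|lborel. u s $ i)"
proof -
  have m: "(\<lambda>x. indicator {0..1} x *\<^sub>R u x) \<in> borel_measurable lborel"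
    and i2: "integrable lborel (\<lambda>x. indicator {0..1} x *\<^sub>R (norm (u x))\<^sup>2)"
    and hi: "\<forall>t\<in>{0..1}. (u has_integral (\<eta> t - \<eta> 0)) {0..t}"
    using assms unfolding lq_control_def set_borel_measurable_def set_integrable_def by auto
  have mi: "(\<lambda>x. (indicator {0..1} x *\<^sub>R u x) \<bullet> axis i 1) \<in> borel_measurable lborel"
    using m by measurable
  then show um: "set_borel_measurable lborel {0..1} (\<lambda>t. u t $ i)"
    unfolding set_borel_measurable_def by (simp add: inner_axis)
  have "integrable lborel (\<lambda>x. indicator {0..1} x *\<^sub>R (u x $ i)^2)"
  proof (rule Bochner_Integration.integrable_bound[OF i2])
    have "(\<lambda>x. ((indicator {0..1} x *\<^sub>R u x) \<bullet> axis i 1)^2) \<in> borel_measurable lborel"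
      using mi by measurable
    moreover have "(\<lambda>x. ((indicator {0..1} x *\<^sub>R u x) \<bullet> axis i 1)^2) = (\<lambda>x. indicator {0..1} x *\<^sub>R (u x $ i)^2)"
      by (rule ext) (simp add: inner_axis indicator_def)
    ultimately show "(\<lambda>x. indicator {0..1} x *\<^sub>R (u x $ i)^2) \<in> borel_measurable lborel"
      by simp
    show "AE x in lborel. norm (indicator {0..1} x *\<^sub>R (u x $ i)^2) \<le> norm (indicator {0..1} x *\<^sub>R (norm (u x))\<^sup>2)"
    proof (rule AE_I2)
      fix x
      have "\<bar>u x $ i\<bar>^2 \<le> (norm (u x))^2" by (rule power_mono[OF component_le_norm_cart]) simp
      then show "norm (indicator {0..1} x *\<^sub>R (u x $ i)^2) \<le> norm (indicator {0..1} x *\<^sub>R (norm (u x))\<^sup>2)"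
        by (simp add: indicator_def)
    qed
  qed
  then show u2: "set_integrable lborel {0..1} (\<lambda>t. (u t $ i)^2)" unfolding set_integrable_def .
  have ui: "set_integrable lborel {0..1} (\<lambda>t. u t $ i)" by (rule L2_L1[OF um u2])
  show "\<forall>t\<in>{0..1}. \<eta> t $ i = \<eta> 0 $ i + (LINT s:{0..t}|lborel. u s $ i)"
  proof
    fix t :: real assume t: "t \<in> {0..1}"
    have "(u has_integral (\<eta> t - \<eta> 0)) {0..t}" using hi t by blast
    from has_integral_linear[OF this bounded_linear_vec_nth[of i]]
    have h: "((\<lambda>s. u s $ i) has_integral (\<eta> t $ i - \<eta> 0 $ i)) {0..t}" by (simp add: o_def)
    have uit: "set_integrable lborel {0..t} (\<lambda>s. u s $ i)"
      by (rule set_integrable_subset[OF ui]) (use t in auto)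
    have "(LINT s:{0..t}|lborel. u s $ i) = integral {0..t} (\<lambda>s. u s $ i)"
      by (rule set_borel_integral_eq_integral(2)[OF uit])
    also have "\<dots> = \<eta> t $ i - \<eta> 0 $ i" by (rule integral_unique[OF h])
    finally show "\<eta> t $ i = \<eta> 0 $ i + (LINT s:{0..t}|lborel. u s $ i)" by simp
  qed
qed

lemma Q_pointwise:
  fixes x y :: "real^'n"
  shows "(norm x)^2 - y \<bullet> ((\<chi> i j. if i = j \<and> i \<noteq> j0 then K else 0 :: real^'n^'n) *v y)
    = (\<Sum>i\<in>UNIV. (x $ i)^2 - (if i = j0 then 0 else K) * (y $ i)^2)"
proof -
  have q: "((\<chi> i j. if i = j \<and> i \<noteq> j0 then K else 0 :: real^'n^'n) *v y) $ i = (if i = j0 then 0 else K) * y $ i" for i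
    by (simp add: matrix_vector_mult_def if_distrib[of "\<lambda>a. a * _"] cong: if_cong)
  have "(norm x)^2 = (\<Sum>i\<in>UNIV. (x $ i)^2)"
    unfolding norm_vec_def L2_set_def by (simp add: sum_nonneg)
  moreover have "y \<bullet> ((\<chi> i j. if i = j \<and> i \<noteq> j0 then K else 0 :: real^'n^'n) *v y) = (\<Sum>i\<in>UNIV. (if i = j0 then 0 else K) * (y $ i)^2)"
    unfolding inner_vec_def q by (simp add: power2_eq_square algebra_simps)
  ultimately show ?thesis by (simp add: sum_subtractf)
qed

definition cc :: "real \<Rightarrow> 'n \<Rightarrow> 'n \<Rightarrow> real" where
  "cc K j0 i = (if i = j0 then 0 else K)"

definition QQ :: "real \<Rightarrow> 'n \<Rightarrow> real^'n^'n" where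
  "QQ K j0 = (\<chi> i j. if i = j \<and> i \<noteq> j0 then K else 0)"

definition Gam :: "real \<Rightarrow> 'n \<Rightarrow> real^'n \<Rightarrow> real^'n \<Rightarrow> real \<Rightarrow> real^'n" where
  "Gam K j0 x z t = (\<chi> i. hc (cc K j0 i) (x $ i) (z $ i) t)"

definition Gam1 :: "real \<Rightarrow> 'n \<Rightarrow> real^'n \<Rightarrow> real^'n \<Rightarrow> real \<Rightarrow> real^'n" where
  "Gam1 K j0 x z t = (\<chi> i. hc1 (cc K j0 i) (x $ i) (z $ i) t)"

definition val :: "real^'n^'n \<Rightarrow> (real \<Rightarrow> real^'n) \<Rightarrow> (real \<Rightarrow> real^'n) \<Rightarrow> real" where
  "val Q \<gamma> u = (1/2) * (LINT t:{0..1}|lborel. (norm (u t))\<^sup>2 - \<gamma> t \<bullet> (Q *v \<gamma> t))"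

lemma cc_lt: "K < pi^2 \<Longrightarrow> cc K j0 i < pi^2"
  by (simp add: cc_def)

lemma Gam_0: "K < pi^2 \<Longrightarrow> Gam K j0 x z 0 = x"
  by (simp add: Gam_def vec_eq_iff hc_0 cc_lt)

lemma Gam_1: "K < pi^2 \<Longrightarrow> Gam K j0 x z 1 = z"
  by (simp add: Gam_def vec_eq_iff hc_1 cc_lt)

lemma Gam1_cont: "continuous_on S (Gam1 K j0 x z)"
  unfolding Gam1_def[abs_def] by (intro continuous_on_vec_lambda deriv_cont_on[OF hc1_deriv])

lemma Gam_control: "lq_control (0::real^'n^'n) (mat 1 :: real^'n^'n) 1 (Gam K j0 x z) (Gam1 K j0 x z)"
  unfolding lq_control_def
proof (intro conjI ballI)
  show "set_borel_measurable lborel {0..1} (Gam1 K j0 x z)"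
    unfolding set_borel_measurable_def
    using borel_measurable_continuous_on_indicator[OF _ Gam1_cont, of "{0..1}"] by simp
  show "set_integrable lborel {0..1} (\<lambda>t. (norm (Gam1 K j0 x z t))\<^sup>2)"
    unfolding set_integrable_def
    using borel_integrable_atLeastAtMost'[of 0 1 "\<lambda>t. (norm (Gam1 K j0 x z t))\<^sup>2"]
    by (simp add: set_integrable_def continuous_intros Gam1_cont)
  fix t :: real assume t: "t \<in> {0..1}"
  show "((\<lambda>s. 0 *v Gam K j0 x z s + mat 1 *v Gam1 K j0 x z s) has_integral Gam K j0 x z t - Gam K j0 x z 0) {0..t}"
  proof -
    have "(Gam1 K j0 x z has_integral Gam K j0 x z t - Gam K j0 x z 0) {0..t}"
    proof (rule vec_has_integral)
      fix i
      have "((\<lambda>s. hc1 (cc K j0 i) (x $ i) (z $ i) s) has_integral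
              (hc (cc K j0 i) (x $ i) (z $ i) t - hc (cc K j0 i) (x $ i) (z $ i) 0)) {0..t}"
        by (rule fundamental_theorem_of_calculus)
           (use t hc_deriv in \<open>auto simp: has_real_derivative_iff_has_vector_derivative intro: has_vector_derivative_at_within\<close>)
      then show "((\<lambda>s. Gam1 K j0 x z s $ i) has_integral (Gam K j0 x z t - Gam K j0 x z 0) $ i) {0..t}"
        by (simp add: Gam_def Gam1_def)
    qed
    then show ?thesis by simp
  qed
qed

lemma val_split:
  fixes \<eta> u :: "real \<Rightarrow> real^'n"
  assumes "\<And>i. set_integrable lborel {0..1} (\<lambda>t. (u t $ i)^2 - cc K j0 i * (\<eta> t $ i)^2)"
  shows "val (QQ K j0) \<eta> u = (1/2) * (\<Sum>i\<in>UNIV. LINT t:{0..1}|lborel. (u t $ i)^2 - cc K j0 i * (\<eta> t $ i)^2)"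
proof -
  have "(LINT t:{0..1}|lborel. (norm (u t))\<^sup>2 - \<eta> t \<bullet> (QQ K j0 *v \<eta> t))
      = (LINT t:{0..1}|lborel. (\<Sum>i\<in>UNIV. (u t $ i)^2 - cc K j0 i * (\<eta> t $ i)^2))"
    unfolding QQ_def cc_def Q_pointwise ..
  also have "\<dots> = (\<Sum>i\<in>UNIV. LINT t:{0..1}|lborel. (u t $ i)^2 - cc K j0 i * (\<eta> t $ i)^2)"
    by (rule si_sum) (use assms in auto)
  finally show ?thesis unfolding val_def by simp
qed

definition epsK :: "real \<Rightarrow> real" where "epsK K = (pi^2 - max K 0) / 2"

lemma main_ineq:
  fixes \<eta> u :: "real \<Rightarrow> real^'n"
  assumes K: "K < pi^2" and ctl: "lq_control (0::real^'n^'n) (mat 1 :: real^'n^'n) 1 \<eta> u"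
    and e0: "\<eta> 0 = x" and e1: "\<eta> 1 = z"
  shows "val (QQ K j0) (Gam K j0 x z) (Gam1 K j0 x z)
          + epsK K / 2 * (\<Sum>i\<in>UNIV. LINT t:{0..1}|lborel. (\<eta> t $ i - Gam K j0 x z t $ i)^2)
         \<le> val (QQ K j0) \<eta> u"
    "\<And>i. 0 \<le> (LINT t:{0..1}|lborel. (\<eta> t $ i - Gam K j0 x z t $ i)^2)"
    "epsK K > 0"
proof -
  show epos: "epsK K > 0" using K by (simp add: epsK_def max_def)
  show "\<And>i. 0 \<le> (LINT t:{0..1}|lborel. (\<eta> t $ i - Gam K j0 x z t $ i)^2)"
    by (rule si_nonneg) simp
  let ?c = "cc K j0"
  let ?h = "\<lambda>i. hc (?c i) (x $ i) (z $ i)"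
  let ?h1 = "\<lambda>i. hc1 (?c i) (x $ i) (z $ i)"
  have ce: "?c i + epsK K < pi^2" for i
    using K by (auto simp: cc_def epsK_def max_def field_simps)
  have SM: "set_integrable lborel {0..1} (\<lambda>t. (u t $ i)^2 - ?c i * (\<eta> t $ i)^2)
    \<and> (LINT t:{0..1}|lborel. (?h1 i t)^2 - ?c i * (?h i t)^2) + epsK K * (LINT t:{0..1}|lborel. (\<eta> t $ i - ?h i t)^2)
       \<le> (LINT t:{0..1}|lborel. (u t $ i)^2 - ?c i * (\<eta> t $ i)^2)" for i
  proof -
    have a: "\<eta> 0 $ i = ?h i 0" using e0 hc_0[OF cc_lt[OF K, of j0 i]] by simp
    have b: "\<eta> 1 $ i = ?h i 1" using e1 hc_1[OF cc_lt[OF K, of j0 i]] by simp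
    note S = scalar_main[OF ce ctrl_comp(1)[OF ctl] ctrl_comp(2)[OF ctl] ctrl_comp(3)[OF ctl] a b hc_deriv hc1_deriv]
    show ?thesis using S(1) S(3) by blast
  qed
  have GI: "set_integrable lborel {0..1} (\<lambda>t. (Gam1 K j0 x z t $ i)^2 - ?c i * (Gam K j0 x z t $ i)^2)" for i
    unfolding Gam_def Gam1_def
    by (rule si_cont) (simp, intro continuous_intros deriv_cont_on[OF hc1_deriv] deriv_cont_on[OF hc_deriv])
  have vG: "val (QQ K j0) (Gam K j0 x z) (Gam1 K j0 x z) = (1/2) * (\<Sum>i\<in>UNIV. LINT t:{0..1}|lborel. (?h1 i t)^2 - ?c i * (?h i t)^2)"
    using val_split[OF GI] by (simp add: Gam_def[abs_def] Gam1_def[abs_def])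
  have vE: "val (QQ K j0) \<eta> u = (1/2) * (\<Sum>i\<in>UNIV. LINT t:{0..1}|lborel. (u t $ i)^2 - ?c i * (\<eta> t $ i)^2)"
    using val_split[of u K j0 \<eta>] SM by blast
  have "(\<Sum>i\<in>UNIV. LINT t:{0..1}|lborel. (?h1 i t)^2 - ?c i * (?h i t)^2) + epsK K * (\<Sum>i\<in>UNIV. LINT t:{0..1}|lborel. (\<eta> t $ i - ?h i t)^2)
     \<le> (\<Sum>i\<in>UNIV. LINT t:{0..1}|lborel. (u t $ i)^2 - ?c i * (\<eta> t $ i)^2)"
    unfolding sum_distrib_left sum.distrib[symmetric] by (rule sum_mono) (use SM in blast)
  then show "val (QQ K j0) (Gam K j0 x z) (Gam1 K j0 x z)
          + epsK K / 2 * (\<Sum>i\<in>UNIV. LINT t:{0..1}|lborel. (\<eta> t $ i - Gam K j0 x z t $ i)^2)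
         \<le> val (QQ K j0) \<eta> u"
    unfolding vG vE by (simp add: Gam_def)
qed

definition y1 :: "real \<Rightarrow> real \<Rightarrow> real" where
  "y1 c s = (if c > 0 then cos (sqrt c * s) else if c = 0 then 1 else cosh (sqrt (- c) * s))"

definition y2 :: "real \<Rightarrow> real \<Rightarrow> real" where
  "y2 c s = (if c > 0 then sin (sqrt c * s) / sqrt c else if c = 0 then s else sinh (sqrt (- c) * s) / sqrt (- c))"

lemma y2_deriv: "(y2 c has_real_derivative y1 c s) (at s)"
proof -
  consider "c > 0" | "c = 0" | "c < 0" by linarith
  then show ?thesis
  proof cases
    case 1
    have D: "((\<lambda>s. sin (sqrt c * s) / sqrt c) has_real_derivative (cos (sqrt c * s) * (sqrt c * 1)) / sqrt c) (at s)"
      by (intro DERIV_cdivide DERIV_fun_sin DERIV_cmult DERIV_ident)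
    have f: "y2 c = (\<lambda>s. sin (sqrt c * s) / sqrt c)" using 1 by (simp add: y2_def fun_eq_iff)
    show ?thesis unfolding f using D 1 by (simp add: y1_def)
  next
    case 2
    have f: "y2 c = (\<lambda>s. s)" using 2 by (simp add: y2_def fun_eq_iff)
    show ?thesis unfolding f using 2 by (simp add: y1_def)
  next
    case 3
    have D: "((\<lambda>s. sinh (sqrt (-c) * s) / sqrt (-c)) has_real_derivative (cosh (sqrt (-c) * s) * (sqrt (-c) * 1)) / sqrt (-c)) (at s)"
      by (intro DERIV_cdivide has_field_derivative_sinh DERIV_cmult DERIV_ident)
    have f: "y2 c = (\<lambda>s. sinh (sqrt (-c) * s) / sqrt (-c))" using 3 by (simp add: y2_def fun_eq_iff)
    show ?thesis unfolding f using D 3 by (simp add: y1_def)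
  qed
qed

lemma y1_deriv: "(y1 c has_real_derivative (- c * y2 c s)) (at s)"
proof -
  consider "c > 0" | "c = 0" | "c < 0" by linarith
  then show ?thesis
  proof cases
    case 1
    have D: "((\<lambda>s. cos (sqrt c * s)) has_real_derivative (- sin (sqrt c * s) * (sqrt c * 1))) (at s)"
      by (intro DERIV_fun_cos DERIV_cmult DERIV_ident)
    have f: "y1 c = (\<lambda>s. cos (sqrt c * s))" using 1 by (simp add: y1_def fun_eq_iff)
    have e: "- sin (sqrt c * s) * (sqrt c * 1) = - c * y2 c s"
    proof -
      have "sqrt c * sqrt c = c" using 1 by simp
      then show ?thesis using 1 by (simp add: y2_def field_simps)
    qed
    show ?thesis unfolding f using D unfolding e .
  next
    case 2
    have f: "y1 c = (\<lambda>s. 1)" using 2 by (simp add: y1_def fun_eq_iff)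
    show ?thesis unfolding f using 2 by simp
  next
    case 3
    have D: "((\<lambda>s. cosh (sqrt (-c) * s)) has_real_derivative (sinh (sqrt (-c) * s) * (sqrt (-c) * 1))) (at s)"
      by (intro has_field_derivative_cosh DERIV_cmult DERIV_ident)
    have f: "y1 c = (\<lambda>s. cosh (sqrt (-c) * s))" using 3 by (simp add: y1_def fun_eq_iff)
    have e: "sinh (sqrt (-c) * s) * (sqrt (-c) * 1) = - c * y2 c s"
    proof -
      have "(- c) / sqrt (-c) = sqrt (-c)" using 3 real_div_sqrt[of "- c"] by simp
      then have "- c * (sinh (sqrt (-c) * s) / sqrt (-c)) = sqrt (-c) * sinh (sqrt (-c) * s)"
        by (metis times_divide_eq_left times_divide_eq_right mult.commute)
      then show ?thesis using 3 by (simp add: y2_def mult.commute)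
    qed
    show ?thesis unfolding f using D unfolding e .
  qed
qed

lemma wronsk: "(y1 c s)^2 + c * (y2 c s)^2 = 1"
proof -
  consider "c > 0" | "c = 0" | "c < 0" by linarith
  then show ?thesis
  proof cases
    case 1
    have "c * (sin (sqrt c * s) / sqrt c)^2 = (sin (sqrt c * s))^2"
      using 1 by (simp add: power_divide)
    then show ?thesis using 1 by (simp add: y1_def y2_def)
  next
    case 3
    have a: "c * (sinh (sqrt (- c) * s) / sqrt (- c))^2 = -((sinh (sqrt (- c) * s))^2)"
      using 3 by (simp add: power_divide)
    have b: "(cosh (sqrt (- c) * s))^2 = (sinh (sqrt (- c) * s))^2 + 1" by (rule cosh_square_eq)
    show ?thesis using 3 a b by (simp add: y1_def y2_def)
  qed (simp add: y1_def y2_def)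
qed

lemma y1_0: "y1 c 0 = 1" by (simp add: y1_def)
lemma y2_0: "y2 c 0 = 0" by (simp add: y2_def)

lemma y2_nz:
  assumes t: "0 < t" and ct: "c > 0 \<Longrightarrow> sqrt c * t < pi"
  shows "y2 c t \<noteq> 0"
proof -
  consider "c > 0" | "c = 0" | "c < 0" by linarith
  then show ?thesis
  proof cases
    case 1
    have "sin (sqrt c * t) > 0" using 1 t ct by (intro sin_gt_zero) auto
    then show ?thesis using 1 by (simp add: y2_def)
  next
    case 3
    have "sinh (sqrt (-c) * t) > 0" using 3 t by simp
    then show ?thesis using 3 t by (simp add: y2_def)
  qed (use t in \<open>simp add: y2_def\<close>)
qed

lemma scalar_conj:
  fixes X P :: "real \<Rightarrow> real"
  assumes dX: "\<And>s. (X has_real_derivative P s) (at s)"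
    and dP: "\<And>s. (P has_real_derivative (- c * X s)) (at s)"
    and X0: "X 0 = 0" and Xt: "X t = 0" and t: "0 < t" and ct: "c > 0 \<Longrightarrow> sqrt c * t < pi"
  shows "X s = 0 \<and> P s = 0"
proof -
  define f where "f s = X s * y1 c s - P s * y2 c s" for s
  define g where "g s = c * X s * y2 c s + P s * y1 c s" for s
  have df: "(f has_real_derivative 0) (at s)" for s
  proof -
    have "(f has_real_derivative ((P s * y1 c s + (- c * y2 c s) * X s) - ((- c * X s) * y2 c s + y1 c s * P s))) (at s)"
      unfolding f_def[abs_def] by (intro DERIV_diff DERIV_mult dX dP y1_deriv y2_deriv)
    moreover have "(P s * y1 c s + (- c * y2 c s) * X s) - ((- c * X s) * y2 c s + y1 c s * P s) = 0"
      by (simp add: algebra_simps)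
    ultimately show ?thesis by simp
  qed
  have dg: "(g has_real_derivative 0) (at s)" for s
  proof -
    have "(g has_real_derivative (((c * P s) * y2 c s + y1 c s * (c * X s)) + ((- c * X s) * y1 c s + (- c * y2 c s) * P s))) (at s)"
      unfolding g_def[abs_def] by (intro DERIV_add DERIV_mult DERIV_cmult dX dP y1_deriv y2_deriv)
    moreover have "((c * P s) * y2 c s + y1 c s * (c * X s)) + ((- c * X s) * y1 c s + (- c * y2 c s) * P s) = 0"
      by (simp add: algebra_simps)
    ultimately show ?thesis by simp
  qed
  have fc: "f s = f 0" for s using df DERIV_isconst_all by blast
  have gc: "g s = g 0" for s using dg DERIV_isconst_all by blast
  have f0: "f 0 = 0" by (simp add: f_def X0 y2_0)
  have g0: "g 0 = P 0" by (simp add: g_def X0 y1_0)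
  have "f t = - P t * y2 c t" by (simp add: f_def Xt)
  then have "P t * y2 c t = 0" using fc[of t] f0 by simp
  then have Pt: "P t = 0" using y2_nz[OF t ct] by simp
  have "g t = 0" by (simp add: g_def Xt Pt)
  then have gz: "g s = 0" for s using gc[of t] gc[of s] by simp
  have fz: "f s = 0" for s using fc[of s] f0 by simp
  have W: "(y1 c s)^2 + c * (y2 c s)^2 = 1" by (rule wronsk)
  have "X s = y1 c s * f s + y2 c s * g s"
  proof -
    have "y1 c s * f s + y2 c s * g s = X s * ((y1 c s)^2 + c * (y2 c s)^2)"
      by (simp add: f_def g_def algebra_simps power2_eq_square)
    then show ?thesis using W by simp
  qed
  moreover have "P s = - c * y2 c s * f s + y1 c s * g s"
  proof -
    have "- c * y2 c s * f s + y1 c s * g s = P s * ((y1 c s)^2 + c * (y2 c s)^2)"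
      by (simp add: f_def g_def algebra_simps power2_eq_square)
    then show ?thesis using W by simp
  qed
  ultimately show ?thesis using fz gz by simp
qed

lemma epsK_pos: "K < pi^2 \<Longrightarrow> epsK K > 0"
  by (simp add: epsK_def max_def)

lemma action_eq:
  "lq_action (0::real^'n^'n) (mat 1 :: real^'n^'n) Q 1 \<gamma> = (INF u \<in> {u. lq_control (0::real^'n^'n) (mat 1 :: real^'n^'n) 1 \<gamma> u}. ereal (val Q \<gamma> u))"
  by (simp add: lq_action_def val_def)

lemma Gam_action_le:
  "lq_action (0::real^'n^'n) (mat 1 :: real^'n^'n) (QQ K j0) 1 (Gam K j0 x z) \<le> ereal (val (QQ K j0) (Gam K j0 x z) (Gam1 K j0 x z))"
  unfolding action_eq by (rule INF_lower2[of "Gam1 K j0 x z"]) (auto simp: Gam_control)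

lemma action_ge:
  fixes \<eta> :: "real \<Rightarrow> real^'n"
  assumes K: "K < pi^2" and e0: "\<eta> 0 = x" and e1: "\<eta> 1 = z"
  shows "ereal (val (QQ K j0) (Gam K j0 x z) (Gam1 K j0 x z)
          + epsK K / 2 * (\<Sum>i\<in>UNIV. LINT t:{0..1}|lborel. (\<eta> t $ i - Gam K j0 x z t $ i)^2))
         \<le> lq_action (0::real^'n^'n) (mat 1 :: real^'n^'n) (QQ K j0) 1 \<eta>"
  unfolding action_eq
proof (rule INF_greatest)
  fix u assume "u \<in> {u. lq_control (0::real^'n^'n) (mat 1 :: real^'n^'n) 1 \<eta> u}"
  then have ctl: "lq_control (0::real^'n^'n) (mat 1 :: real^'n^'n) 1 \<eta> u" by simp
  show "ereal (val (QQ K j0) (Gam K j0 x z) (Gam1 K j0 x z)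
          + epsK K / 2 * (\<Sum>i\<in>UNIV. LINT t:{0..1}|lborel. (\<eta> t $ i - Gam K j0 x z t $ i)^2))
         \<le> ereal (val (QQ K j0) \<eta> u)"
    using main_ineq(1)[OF K ctl e0 e1] by simp
qed

lemma Gam_optimal:
  assumes K: "K < pi^2"
  shows "lq_optimal (0::real^'n^'n) (mat 1 :: real^'n^'n) (QQ K j0) 1 (Gam K j0 x z)"
  unfolding lq_optimal_def lq_admissible_def
proof (intro conjI allI impI)
  show "\<exists>u. lq_control (0::real^'n^'n) (mat 1 :: real^'n^'n) 1 (Gam K j0 x z) u"
    using Gam_control by blast
  fix \<eta> :: "real \<Rightarrow> real^'n"
  assume a: "\<eta> 0 = Gam K j0 x z 0" "\<eta> 1 = Gam K j0 x z 1"
  then have e0: "\<eta> 0 = x" and e1: "\<eta> 1 = z" using Gam_0[OF K] Gam_1[OF K] by auto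
  have nn: "0 \<le> epsK K / 2 * (\<Sum>i\<in>UNIV. LINT t:{0..1}|lborel. (\<eta> t $ i - Gam K j0 x z t $ i)^2)"
    using epsK_pos[OF K] 
    by (intro mult_nonneg_nonneg sum_nonneg si_nonneg) auto
  have "lq_action (0::real^'n^'n) (mat 1 :: real^'n^'n) (QQ K j0) 1 (Gam K j0 x z) \<le> ereal (val (QQ K j0) (Gam K j0 x z) (Gam1 K j0 x z))"
    by (rule Gam_action_le)
  also have "\<dots> \<le> ereal (val (QQ K j0) (Gam K j0 x z) (Gam1 K j0 x z)
          + epsK K / 2 * (\<Sum>i\<in>UNIV. LINT t:{0..1}|lborel. (\<eta> t $ i - Gam K j0 x z t $ i)^2))"
    using nn by simp
  also have "\<dots> \<le> lq_action (0::real^'n^'n) (mat 1 :: real^'n^'n) (QQ K j0) 1 \<eta>"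
    by (rule action_ge[OF K e0 e1])
  finally show "lq_action (0::real^'n^'n) (mat 1 :: real^'n^'n) (QQ K j0) 1 (Gam K j0 x z) \<le> lq_action (0::real^'n^'n) (mat 1 :: real^'n^'n) (QQ K j0) 1 \<eta>" .
qed

lemma opt_unique:
  fixes \<eta> :: "real \<Rightarrow> real^'n"
  assumes K: "K < pi^2" and opt: "lq_optimal (0::real^'n^'n) (mat 1 :: real^'n^'n) (QQ K j0) 1 \<eta>"
    and e0: "\<eta> 0 = x" and e1: "\<eta> 1 = z"
  shows "\<forall>t\<in>{0..1}. \<eta> t = Gam K j0 x z t"
proof -
  obtain u0 where ctl: "lq_control (0::real^'n^'n) (mat 1 :: real^'n^'n) 1 \<eta> u0"
    using opt unfolding lq_optimal_def lq_admissible_def by blast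
  have "lq_action (0::real^'n^'n) (mat 1 :: real^'n^'n) (QQ K j0) 1 \<eta> \<le> lq_action (0::real^'n^'n) (mat 1 :: real^'n^'n) (QQ K j0) 1 (Gam K j0 x z)"
    using opt Gam_0[OF K, of j0 x z] Gam_1[OF K, of j0 x z] e0 e1 unfolding lq_optimal_def by auto
  also have "\<dots> \<le> ereal (val (QQ K j0) (Gam K j0 x z) (Gam1 K j0 x z))" by (rule Gam_action_le)
  finally have "ereal (val (QQ K j0) (Gam K j0 x z) (Gam1 K j0 x z)
          + epsK K / 2 * (\<Sum>i\<in>UNIV. LINT t:{0..1}|lborel. (\<eta> t $ i - Gam K j0 x z t $ i)^2))
        \<le> ereal (val (QQ K j0) (Gam K j0 x z) (Gam1 K j0 x z))"
    using action_ge[OF K e0 e1, of j0] by (rule order_trans[rotated])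
  then have "epsK K / 2 * (\<Sum>i\<in>UNIV. LINT t:{0..1}|lborel. (\<eta> t $ i - Gam K j0 x z t $ i)^2) \<le> 0" by simp
  moreover have ep: "epsK K > 0" by (rule epsK_pos[OF K])
  ultimately have "(\<Sum>i\<in>UNIV. LINT t:{0..1}|lborel. (\<eta> t $ i - Gam K j0 x z t $ i)^2) \<le> 0"
    by (simp add: mult_le_0_iff)
  moreover have nn: "\<And>i. 0 \<le> (LINT t:{0..1}|lborel. (\<eta> t $ i - Gam K j0 x z t $ i)^2)"
    by (rule si_nonneg) simp
  ultimately have "(\<Sum>i\<in>UNIV. LINT t:{0..1}|lborel. (\<eta> t $ i - Gam K j0 x z t $ i)^2) = 0"
    by (meson antisym sum_nonneg)
  then have z: "\<And>i. (LINT t:{0..1}|lborel. (\<eta> t $ i - Gam K j0 x z t $ i)^2) = 0"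
    using nn by (simp add: sum_nonneg_eq_0_iff)
  have comp: "\<eta> t $ i = Gam K j0 x z t $ i" if t: "t \<in> {0..1}" for t i
  proof -
    let ?f = "\<lambda>t. (\<eta> t $ i - Gam K j0 x z t $ i)^2"
    have ui: "set_integrable lborel {0..1} (\<lambda>t. u0 t $ i)"
      by (rule L2_L1[OF ctrl_comp(1)[OF ctl] ctrl_comp(2)[OF ctl]])
    have ec: "continuous_on {0..1} (\<lambda>t. \<eta> t $ i)"
    proof -
      have "continuous_on {0..1} (\<lambda>t. \<eta> 0 $ i + (LINT s:{0..t}|lborel. u0 s $ i))"
        by (intro continuous_intros prim_cont[OF ui])
      moreover have "continuous_on {0..1} (\<lambda>t. \<eta> t $ i) = continuous_on {0..1} (\<lambda>t. \<eta> 0 $ i + (LINT s:{0..t}|lborel. u0 s $ i))"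
        by (rule continuous_on_cong) (use ctrl_comp(3)[OF ctl, of i] in blast)+
      ultimately show ?thesis by simp
    qed
    have gc: "continuous_on {0..1} (\<lambda>t. Gam K j0 x z t $ i)"
      unfolding Gam_def by (simp add: deriv_cont_on[OF hc_deriv])
    have fc: "continuous_on {0..1} ?f" by (intro continuous_intros ec gc)
    have "integral {0..1} ?f = (LINT t:{0..1}|lborel. ?f t)"
      by (rule set_borel_integral_eq_integral(2)[symmetric]) (rule si_cont[OF fc])
    then have "integral {0..1} ?f = 0" using z by simp
    then have "\<forall>t\<in>{0..1}. ?f t = 0"
      using integral_eq_0_iff[OF fc, of] by simp
    then show ?thesis using t by simp
  qed
  show ?thesis using comp by (simp add: vec_eq_iff)
qed

lemma measure_diag_image:
  fixes s :: "'n::finite \<Rightarrow> real" and w :: "real^'n" and B :: "(real^'n) set"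
  assumes s: "\<And>i. s i \<noteq> 0" and B: "B \<in> sets borel"
  shows "measure lebesgue ((\<lambda>z. w + (\<chi> i. s i * z $ i)) ` B) = (\<Prod>i\<in>UNIV. \<bar>s i\<bar>) * measure lebesgue B"
proof -
  define D where "D z = w + (\<chi> i. s i * z $ i)" for z :: "real^'n"
  define c where "c (j::real^'n) = 1 / s (axis_index j)" for j
  define t :: "real^'n" where "t = (\<chi> i. - (w $ i / s i))"
  define T where "T x = t + (\<Sum>j\<in>Basis. (c j * (x \<bullet> j)) *\<^sub>R j)" for x :: "real^'n"
  have Tv: "T x = (\<chi> i. (x $ i - w $ i) / s i)" for x
  proof -
    have "(\<Sum>j\<in>Basis. (c j * (x \<bullet> j)) *\<^sub>R j) = (\<chi> k. x $ k / s k)"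
      using vec_lambda_eq_sum[where f="\<lambda>k y. y / s k" and x=x] by (simp add: c_def)
    then show ?thesis unfolding T_def t_def by (simp add: vec_eq_iff diff_divide_distrib)
  qed
  have cne: "\<And>j. j \<in> Basis \<Longrightarrow> c j \<noteq> 0" using s by (simp add: c_def)
  have L: "lborel = density (distr lborel borel T) (\<lambda>_. (\<Prod>j\<in>Basis. \<bar>c j\<bar>))"
    unfolding T_def by (rule lborel_affine_euclidean[OF cne])
  have Tm[measurable]: "T \<in> borel \<rightarrow>\<^sub>M borel" unfolding T_def[abs_def] by simp
  have pre: "T -` B = D ` B"
  proof (intro set_eqI iffI)
    fix y assume "y \<in> T -` B"
    then have "T y \<in> B" by simp
    moreover have "D (T y) = y" using s by (simp add: D_def Tv vec_eq_iff)
    ultimately show "y \<in> D ` B" by (metis image_eqI)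
  next
    fix y assume "y \<in> D ` B"
    then obtain z where z: "z \<in> B" "y = D z" by auto
    have "T (D z) = z" using s by (simp add: D_def Tv vec_eq_iff)
    then show "y \<in> T -` B" using z by simp
  qed
  have P: "(\<Prod>j\<in>Basis. \<bar>c j\<bar>) = (\<Prod>i\<in>UNIV. \<bar>1 / s i\<bar>)"
    unfolding c_def
    by (simp add: Basis_vec_def UNION_singleton_eq_range prod.reindex axis_eq_axis inj_on_def)
  have "emeasure lborel B = emeasure (density (distr lborel borel T) (\<lambda>_. (\<Prod>j\<in>Basis. \<bar>c j\<bar>))) B"
    using L by simp
  also have "\<dots> = ennreal (\<Prod>j\<in>Basis. \<bar>c j\<bar>) * emeasure lborel (T -` B)"
    using B by (simp add: emeasure_density emeasure_distr nn_integral_cmult_indicator prod_nonneg)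
  finally have E: "emeasure lborel B = ennreal (\<Prod>i\<in>UNIV. \<bar>1 / s i\<bar>) * emeasure lborel (D ` B)"
    unfolding pre P .
  have "measure lborel B = (\<Prod>i\<in>UNIV. \<bar>1 / s i\<bar>) * measure lborel (D ` B)"
    unfolding measure_def E by (simp add: enn2real_mult prod_nonneg)
  moreover have pp: "(\<Prod>i\<in>UNIV. \<bar>s i\<bar>) * (\<Prod>i\<in>UNIV. \<bar>1 / s i\<bar>) = 1"
    unfolding prod.distrib[symmetric] using s by (simp add: abs_mult[symmetric])
  ultimately have "measure lborel (D ` B) = (\<Prod>i\<in>UNIV. \<bar>s i\<bar>) * measure lborel B"
    by (metis (no_types, lifting) mult.assoc mult_1 mult.commute)
  moreover have "D ` B \<in> sets borel" using measurable_sets[OF Tm B] unfolding pre[symmetric] by simp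
  ultimately show ?thesis using B unfolding D_def by simp
qed

lemma QQ_comp: "(QQ K j0 *v y) $ i = cc K j0 i * y $ i"
  by (simp add: QQ_def cc_def matrix_vector_mult_def if_distrib[of "\<lambda>a. a * _"] cong: if_cong)

lemma transpose_zero': "transpose (0::real^'n^'n) = 0"
  by (simp add: transpose_def vec_eq_iff)

lemma conj_ge:
  assumes ct: "lq_conjugate_time (0::real^'n^'n) (mat 1::real^'n^'n) (QQ K j0) t"
  shows "t \<ge> (if K > 0 then pi / sqrt K else 2)"
proof (rule ccontr)
  assume lt: "\<not> t \<ge> (if K > 0 then pi / sqrt K else 2)"
  obtain p x where ham: "lq_hamiltonian_solution (0::real^'n^'n) (mat 1::real^'n^'n) (QQ K j0) p x"
    and nt: "\<not> (\<forall>s. p s = 0 \<and> x s = 0)" and x0: "x 0 = 0" and xt: "x t = 0" and t: "t > 0"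
    using ct unfolding lq_conjugate_time_def by blast
  have hp: "\<And>s. (p has_vector_derivative (- (QQ K j0 *v x s))) (at s)"
    and hx: "\<And>s. (x has_vector_derivative p s) (at s)"
    using ham unfolding lq_hamiltonian_solution_def by (auto simp: transpose_zero')
  have comp: "x s $ i = 0 \<and> p s $ i = 0" for s i
  proof (rule scalar_conj[where c="cc K j0 i" and t=t and X="\<lambda>s. x s $ i" and P="\<lambda>s. p s $ i" and s=s])
    fix s
    show "((\<lambda>s. x s $ i) has_real_derivative p s $ i) (at s)"
      using bounded_linear.has_vector_derivative[OF bounded_linear_vec_nth hx[of s], of i]
      by (simp add: has_real_derivative_iff_has_vector_derivative)
    show "((\<lambda>s. p s $ i) has_real_derivative (- cc K j0 i * x s $ i)) (at s)"
      using bounded_linear.has_vector_derivative[OF bounded_linear_vec_nth hp[of s], of i]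
      by (simp add: has_real_derivative_iff_has_vector_derivative QQ_comp)
  next
    show "x 0 $ i = 0" using x0 by simp
    show "x t $ i = 0" using xt by simp
    show "0 < t" by (rule t)
    assume cpos: "cc K j0 i > 0"
    then have K: "K > 0" and c: "cc K j0 i = K" by (auto simp: cc_def split: if_splits)
    have "t < pi / sqrt K" using lt K by simp
    then show "sqrt (cc K j0 i) * t < pi" using K c by (simp add: field_simps)
  qed
  then show False using nt by (simp add: vec_eq_iff)
qed

lemma conj_gt1:
  assumes K: "K < pi^2"
  shows "1 < lq_first_conjugate_time (0::real^'n^'n) (mat 1::real^'n^'n) (QQ K j0)"
proof -
  define T0 where "T0 = (if K > 0 then pi / sqrt K else 2)"
  have T0: "1 < T0"
  proof (cases "K > 0")
    case True
    have "sqrt K < pi" by (rule sqrt_lt_pi[OF True K])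
    then show ?thesis using True by (simp add: T0_def field_simps)
  qed (simp add: T0_def)
  have "ereal T0 \<le> lq_first_conjugate_time (0::real^'n^'n) (mat 1::real^'n^'n) (QQ K j0)"
    unfolding lq_first_conjugate_time_def
  proof (rule Inf_greatest)
    fix y assume "y \<in> ereal ` {t. lq_conjugate_time (0::real^'n^'n) (mat 1::real^'n^'n) (QQ K j0) t}"
    then obtain t where y: "y = ereal t" and ct: "lq_conjugate_time (0::real^'n^'n) (mat 1::real^'n^'n) (QQ K j0) t"
      by auto
    have "T0 \<le> t" using conj_ge[OF ct] unfolding T0_def .
    then show "ereal T0 \<le> y" using y by simp
  qed
  moreover have "(1::ereal) < ereal T0" using T0 by simp
  ultimately show ?thesis by (rule less_le_trans[rotated])
qed

lemma Sf_pos: "c < pi^2 \<Longrightarrow> 0 < t \<Longrightarrow> t \<le> 1 \<Longrightarrow> Sf c t > 0"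
proof -
  assume c: "c < pi^2" and t: "0 < t" "t \<le> 1"
  consider "c > 0" | "c = 0" | "c < 0" by linarith
  then show ?thesis
  proof cases
    case 1
    have s1: "sin (sqrt c) > 0" using 1 sqrt_lt_pi[OF 1 c] by (intro sin_gt_zero) auto
    have st: "sqrt c * t \<le> sqrt c" using t 1 by (auto intro: mult_left_le)
    have st2: "sqrt c * t < pi" using st sqrt_lt_pi[OF 1 c] by linarith
    have "sin (sqrt c * t) > 0" using t 1 st2 by (intro sin_gt_zero) auto
    then show ?thesis using 1 s1 by (simp add: Sf_def)
  next
    case 3
    have "sinh (sqrt (-c)) > 0" using 3 by simp
    moreover have "sinh (sqrt (-c) * t) > 0" using 3 t by simp
    ultimately show ?thesis using 3 by (simp add: Sf_def)
  qed (use t in \<open>simp add: Sf_def\<close>)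
qed

lemma Z_eq:
  assumes K: "K < pi^2" and that: "\<tau> \<in> {0..1}"
  shows "lq_Z (0::real^'n^'n) (mat 1::real^'n^'n) (QQ K j0) 1 \<tau> x F = (\<lambda>z. Gam K j0 x z \<tau>) ` F"
proof (intro set_eqI iffI)
  fix w assume "w \<in> lq_Z (0::real^'n^'n) (mat 1::real^'n^'n) (QQ K j0) 1 \<tau> x F"
  then obtain \<gamma> where w: "w = \<gamma> \<tau>" and opt: "lq_optimal (0::real^'n^'n) (mat 1::real^'n^'n) (QQ K j0) 1 \<gamma>"
    and g0: "\<gamma> 0 = x" and g1: "\<gamma> 1 \<in> F"
    unfolding lq_Z_def by blast
  have "\<gamma> \<tau> = Gam K j0 x (\<gamma> 1) \<tau>" using opt_unique[OF K opt g0 refl] that by blast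
  then show "w \<in> (\<lambda>z. Gam K j0 x z \<tau>) ` F" using w g1 by blast
next
  fix w assume "w \<in> (\<lambda>z. Gam K j0 x z \<tau>) ` F"
  then obtain z where w: "w = Gam K j0 x z \<tau>" and z: "z \<in> F" by blast
  show "w \<in> lq_Z (0::real^'n^'n) (mat 1::real^'n^'n) (QQ K j0) 1 \<tau> x F"
    unfolding lq_Z_def mem_Collect_eq
    by (rule exI[of _ "Gam K j0 x z"]) (use w z Gam_optimal[OF K, of j0 x z] Gam_0[OF K, of j0 x z] Gam_1[OF K, of j0 x z] in auto)
qed

lemma ball_measure_pos: "r > 0 \<Longrightarrow> measure lebesgue (ball (y::real^'n) r) > 0"
proof -
  assume r: "r > 0"
  have "measure lebesgue (ball y r) = measure lborel (ball y r)"
    by (rule measure_completion) simp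
  then show ?thesis using content_ball_pos[OF r] by simp
qed

lemma ratio:
  fixes x y :: "real^'n"
  assumes K: "K < pi^2" and \<tau>: "\<tau> \<in> {0..1}" and r: "r > 0"
  shows "measure lebesgue (lq_Z (0::real^'n^'n) (mat 1::real^'n^'n) (QQ K j0) 1 \<tau> x (ball y r)) / measure lebesgue (ball y r)
     = (\<Prod>i\<in>UNIV. Sf (cc K j0 i) \<tau>)"
proof -
  have mp: "measure lebesgue (ball y r) > 0" by (rule ball_measure_pos[OF r])
  have Z: "lq_Z (0::real^'n^'n) (mat 1::real^'n^'n) (QQ K j0) 1 \<tau> x (ball y r) = (\<lambda>z. Gam K j0 x z \<tau>) ` ball y r"
    by (rule Z_eq[OF K \<tau>])
  show ?thesis
  proof (cases "\<tau> = 0")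
    case True
    have "(\<lambda>z. Gam K j0 x z \<tau>) ` ball y r \<subseteq> {x}"
      using True Gam_0[OF K] by auto
    then have "finite ((\<lambda>z. Gam K j0 x z \<tau>) ` ball y r)" by (rule finite_subset) simp
    then have "measure lebesgue ((\<lambda>z. Gam K j0 x z \<tau>) ` ball y r) = 0"
      by (intro negligible_imp_measure0 negligible_finite)
    moreover have "(\<Prod>i\<in>UNIV. Sf (cc K j0 i) \<tau>) = 0"
      using True by (simp add: Sf_0)
    ultimately show ?thesis using Z by simp
  next
    case False
    define s where "s i = Sf (cc K j0 i) \<tau>" for i
    define w where "w = (\<chi> i. x $ i * Sf (cc K j0 i) (1 - \<tau>))"
    have spos: "s i > 0" for i unfolding s_def using \<tau> False by (intro Sf_pos cc_lt K) auto
    have G: "(\<lambda>z. Gam K j0 x z \<tau>) = (\<lambda>z. w + (\<chi> i. s i * z $ i))"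
      by (simp add: fun_eq_iff Gam_def hc_def w_def s_def vec_eq_iff mult.commute)
    have "measure lebesgue ((\<lambda>z. Gam K j0 x z \<tau>) ` ball y r) = (\<Prod>i\<in>UNIV. \<bar>s i\<bar>) * measure lebesgue (ball y r)"
      unfolding G by (rule measure_diag_image) (metis spos less_irrefl, simp)
    moreover have "(\<Prod>i\<in>UNIV. \<bar>s i\<bar>) = (\<Prod>i\<in>UNIV. s i)" using spos by (simp add: less_imp_le)
    ultimately show ?thesis using mp Z by (simp add: s_def)
  qed
qed

lemma distortion_val:
  fixes x y :: "real^'n"
  assumes K: "K < pi^2" and \<tau>: "\<tau> \<in> {0..1}"
  shows "lq_distortion (0::real^'n^'n) (mat 1::real^'n^'n) (QQ K j0) 1 \<tau> x y = ereal (\<Prod>i\<in>UNIV. Sf (cc K j0 i) \<tau>)"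
proof -
  have "eventually (\<lambda>r. ereal (measure lebesgue (lq_Z (0::real^'n^'n) (mat 1::real^'n^'n) (QQ K j0) 1 \<tau> x (ball y r)) / measure lebesgue (ball y r))
      = ereal (\<Prod>i\<in>UNIV. Sf (cc K j0 i) \<tau>)) (at_right 0)"
    using eventually_at_right_less[of 0]
  proof eventually_elim
    case (elim r)
    then have rp: "0 < r" by simp
    show ?case using ratio[OF K \<tau> rp] by simp
  qed
  then have "lq_distortion (0::real^'n^'n) (mat 1::real^'n^'n) (QQ K j0) 1 \<tau> x y = Limsup (at_right (0::real)) (\<lambda>r. ereal (\<Prod>i\<in>UNIV. Sf (cc K j0 i) \<tau>))"
    unfolding lq_distortion_def by (rule Limsup_eq)
  also have "\<dots> = ereal (\<Prod>i\<in>UNIV. Sf (cc K j0 i) \<tau>)"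
    by (rule Limsup_const) simp
  finally show ?thesis .
qed

lemma prod_cc: "(\<Prod>i\<in>UNIV. Sf (cc K j0 i) \<tau>) = \<tau> * (Sf K \<tau>)^(CARD('n) - 1)"
  for j0 :: "'n::finite"
proof -
  have "(\<Prod>i\<in>UNIV. Sf (cc K j0 i) \<tau>) = Sf (cc K j0 j0) \<tau> * (\<Prod>i\<in>UNIV - {j0}. Sf (cc K j0 i) \<tau>)"
    by (rule prod.remove) auto
  also have "(\<Prod>i\<in>UNIV - {j0}. Sf (cc K j0 i) \<tau>) = (\<Prod>i\<in>UNIV - {j0}. Sf K \<tau>)"
    by (rule prod.cong) (auto simp: cc_def)
  also have "\<dots> = (Sf K \<tau>)^(CARD('n) - 1)" by (simp add: card_Diff_singleton)
  finally show ?thesis by (simp add: cc_def Sf_def)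
qed

lemma sqrt_K_eq:
  fixes d k m :: real
  assumes d: "d \<ge> 0" and m: "m > 0"
  shows "sqrt (\<bar>d\<^sup>2 * k / m\<bar>) = sqrt (\<bar>k\<bar> / m) * d"
proof -
  have e: "\<bar>d\<^sup>2 * k / m\<bar> = d\<^sup>2 * (\<bar>k\<bar> / m)" using m by (simp add: abs_mult abs_divide)
  have "sqrt (d\<^sup>2 * (\<bar>k\<bar> / m)) = sqrt (d\<^sup>2) * sqrt (\<bar>k\<bar> / m)" by (rule real_sqrt_mult)
  also have "sqrt (d\<^sup>2) = d" using d by simp
  finally show ?thesis unfolding e by (simp add: mult.commute)
qed

lemma sf_match:
  fixes d k \<tau> :: real and n :: nat
  assumes n: "n \<ge> 2" and d: "d \<ge> 0"
  shows "\<tau> * (Sf (d\<^sup>2 * k / (real n - 1)) \<tau>)^(n - 1) = space_form_distortion n k d \<tau>"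
proof -
  define K where "K = d\<^sup>2 * k / (real n - 1)"
  define \<theta> where "\<theta> = sqrt (\<bar>k\<bar> / (real n - 1)) * d"
  have m: "real n - 1 > 0" using n by simp
  have th: "sqrt \<bar>K\<bar> = \<theta>" unfolding K_def \<theta>_def by (rule sqrt_K_eq[OF d m])
  have sf: "space_form_distortion n k d \<tau> =
     (if k = 0 \<or> d = 0 then \<tau> ^ n
      else if k > 0 then \<tau> * (sin (\<tau> * \<theta>) / sin \<theta>) ^ (n - 1)
      else \<tau> * (sinh (\<tau> * \<theta>) / sinh \<theta>) ^ (n - 1))"
    unfolding space_form_distortion_def \<theta>_def Let_def ..
  show ?thesis
    unfolding K_def[symmetric] sf
  proof (cases "k = 0 \<or> d = 0")
    case True
    then have "K = 0" by (auto simp: K_def)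
    then have "\<tau> * (Sf K \<tau>)^(n - 1) = \<tau> ^ Suc (n - 1)" by (simp add: Sf_def)
    also have "Suc (n - 1) = n" using n by simp
    finally show "\<tau> * (Sf K \<tau>)^(n - 1) = (if k = 0 \<or> d = 0 then \<tau> ^ n
      else if k > 0 then \<tau> * (sin (\<tau> * \<theta>) / sin \<theta>) ^ (n - 1)
      else \<tau> * (sinh (\<tau> * \<theta>) / sinh \<theta>) ^ (n - 1))" using True by simp
  next
    case False
    then have dp: "d > 0" and k0: "k \<noteq> 0" using d by auto
    show "\<tau> * (Sf K \<tau>)^(n - 1) = (if k = 0 \<or> d = 0 then \<tau> ^ n
      else if k > 0 then \<tau> * (sin (\<tau> * \<theta>) / sin \<theta>) ^ (n - 1)
      else \<tau> * (sinh (\<tau> * \<theta>) / sinh \<theta>) ^ (n - 1))"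
    proof (cases "k > 0")
      case True
      have Kp: "K > 0" unfolding K_def using True dp m by simp
      have "sqrt K = \<theta>" using th Kp by simp
      then show ?thesis using True Kp False by (simp add: Sf_def mult.commute)
    next
      case kn: False
      then have kneg: "k < 0" using k0 by simp
      have Kn: "K < 0" unfolding K_def using kneg dp m by (simp add: divide_neg_pos mult_pos_neg)
      have "sqrt (- K) = \<theta>" using th Kn by simp
      then show ?thesis using kn Kn False by (simp add: Sf_def mult.commute)
    qed
  qed
qed

theorem proposition1p10:
  fixes k d :: real and j0 :: "'n::finite"
  assumes "CARD('n) \<ge> 2"
    and "d \<ge> 0"
    and "k > 0 \<Longrightarrow> d < pi * sqrt ((real CARD('n) - 1) / k)"
  defines "K \<equiv> d\<^sup>2 * k / (real CARD('n) - 1)"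
  defines "A \<equiv> (0 :: real^'n^'n)"
    and "B \<equiv> (mat 1 :: real^'n^'n)"
    and "Q \<equiv> (\<chi> i j. if i = j \<and> i \<noteq> j0 then K else 0 :: real^'n^'n)"
  shows "1 < lq_first_conjugate_time A B Q \<and>
         (\<forall>\<tau>\<in>{0..1}. \<forall>x y.
            lq_distortion A B Q 1 \<tau> x y = ereal (space_form_distortion CARD('n) k d \<tau>))"
proof -
  have n: "CARD('n) \<ge> 2" and d: "d \<ge> 0" using assms(1,2) .
  have m: "real CARD('n) - 1 > 0" using n by simp
  have Qeq: "Q = QQ K j0" unfolding Q_def QQ_def ..
  have Klt: "K < pi^2"
  proof (cases "k > 0")
    case True
    have "d < pi * sqrt ((real CARD('n) - 1) / k)" using assms(3)[OF True] .
    then have "d^2 < (pi * sqrt ((real CARD('n) - 1) / k))^2"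
      using d by (intro power_strict_mono) auto
    also have "\<dots> = pi^2 * ((real CARD('n) - 1) / k)"
      using m True by (simp add: power_mult_distrib)
    finally have "d^2 < pi^2 * ((real CARD('n) - 1) / k)" .
    then have "d^2 * k / (real CARD('n) - 1) < pi^2"
      using m True by (simp add: field_simps)
    then show ?thesis unfolding K_def .
  next
    case False
    have "d^2 * k / (real CARD('n) - 1) \<le> 0"
      using False m by (intro divide_nonpos_pos mult_nonneg_nonpos) auto
    moreover have "(0::real) < pi^2" by simp
    ultimately show ?thesis unfolding K_def by linarith
  qed
  show ?thesis
  proof
    show "1 < lq_first_conjugate_time A B Q"
      unfolding A_def B_def Qeq by (rule conj_gt1[OF Klt])
    show "\<forall>\<tau>\<in>{0..1}. \<forall>x y. lq_distortion A B Q 1 \<tau> x y = ereal (space_form_distortion CARD('n) k d \<tau>)"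
    proof (intro ballI allI)
      fix \<tau> :: real and x y :: "real^'n"
      assume \<tau>: "\<tau> \<in> {0..1}"
      have "lq_distortion A B Q 1 \<tau> x y = ereal (\<Prod>i\<in>UNIV. Sf (cc K j0 i) \<tau>)"
        unfolding A_def B_def Qeq by (rule distortion_val[OF Klt \<tau>])
      also have "(\<Prod>i\<in>UNIV. Sf (cc K j0 i) \<tau>) = \<tau> * (Sf K \<tau>)^(CARD('n) - 1)"
        by (rule prod_cc)
      also have "\<dots> = space_form_distortion CARD('n) k d \<tau>"
        unfolding K_def by (rule sf_match[OF n d])
      finally show "lq_distortion A B Q 1 \<tau> x y = ereal (space_form_distortion CARD('n) k d \<tau>)" .
    qed
  qed
qed

end
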